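(* Let $\nu$ be a signature. The subspace $H_\nu\subset\mathfrak H_\nu$ is invariant under the operators $\mathfrak r_\nu(\mathcal A)$ for all $\mathcal A\in\widetilde{\mathrm{Hinge}}_n$.
   Context: Let $V=\mathbb C^n$ with basis $e_1,\dots,e_n$. A signature is a tuple of integers $\nu_1\ge\dots\ge\nu_n\ge0$; put $\nu_{n+1}=0$, $\mathfrak H_\nu=\bigotimes_{j=1}^n(\Lambda^jV)^{\otimes(\nu_j-\nu_{j+1})}$, $\Xi_\nu=\bigotimes_j(e_1\wedge\dots\wedge e_j)^{\otimes(\nu_j-\nu_{j+1})}$. For $\mathcal A=(A_0,\dots,A_n)$ with $A_j\in\mathrm{Mat}(\Lambda^jV)$, $\mathfrak r_\nu(\mathcal A)=\bigotimes_jA_j^{\otimes(\nu_j-\nu_{j+1})}$. With $\lambda^j_{\mathrm{cha}}(g)v_1\wedge\dots\wedge v_j=gv_1\wedge\dots\wedge gv_j$, $H_\nu$ is the linear span of the vectors $\mathfrak r_\nu(\lambda^0_{\mathrm{cha}}(g),\dots,\lambda^n_{\mathrm{cha}}(g))\Xi_\nu$, $g\in\mathrm{GL}_n(\mathbb C)$. A linear relation is a subspace $P\subset V\oplus V$; $\mathrm{Ker}\,P=\{v: v\oplus0\in P\}$, $\mathrm{Dom}\,P,\mathrm{Im}\,P$ the projections to the first and second summands, $\mathrm{Indef}\,P=\{w:0\oplus w\in P\}$, $\mathrm{rk}\,P=\dim\mathrm{Dom}\,P-\dim\mathrm{Ker}\,P$. If $\dim P=n$, choose bases $f_1,\dots,f_a,g_1,\dots,g_b,h_1,\dots,h_c$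 and $F_1,\dots,F_a,G_1,\dots,G_b,H_1,\dots,H_c$ of $V$ with $P$ spanned by $0\oplus F_i$, $g_j\oplus G_j$, $h_k\oplus0$; $\lambda(P)$ maps $f_1\wedge\dots\wedge f_a\wedge g_{i_1}\wedge\dots\wedge g_{i_s}$ to $F_1\wedge\dots\wedge F_a\wedge G_{i_1}\wedge\dots\wedge G_{i_s}$ and kills the other basis monomials (up to scalar); $\lambda^m(P)$ its restriction to $\Lambda^mV$. A hinge is a sequence $\mathcal P=(P_1,\dots,P_k)$ of $n$-dimensional relations with $\mathrm{Ker}\,P_j=\mathrm{Dom}\,P_{j+1}$, $\mathrm{Im}\,P_j=\mathrm{Indef}\,P_{j+1}$, $\mathrm{Dom}\,P_1=V$, $\mathrm{Im}\,P_k=V$, $\mathrm{rk}\,P_j>0$. For each $m$ there is a nonzero $\lambda^m(P_j)$, and any two nonzero ones are proportional; $\lambda^m(\mathcal P)$ denotes it (up to scalar). $\widetilde{\mathrm{Hinge}}_n$ is the set of tuples $(c_0\lambda^0(\mathcal P),\dots,c_n\lambda^n(\mathcal P))$ with $\mathcal P$ a hinge and $c_j\in\mathbb C$. *)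

theory Defs
  imports Complex_Main "Jordan_Normal_Form.Determinant"
begin

text \<open>V = C^n is modelled as functions nat => complex vanishing outside {..<n};
 e_{i+1} corresponds to the indicator of i (0-based indices).\<close>

type_synonym cvec = "nat \<Rightarrow> complex"

definition zv :: cvec where "zv = (\<lambda>_. 0)"

definition inV :: "nat \<Rightarrow> cvec \<Rightarrow> bool" where
  "inV n v \<longleftrightarrow> (\<forall>i\<ge>n. v i = 0)"

definition Vsp :: "nat \<Rightarrow> cvec set" where
  "Vsp n = {v. inV n v}"

definition lcomb :: "cvec list \<Rightarrow> (nat \<Rightarrow> complex) \<Rightarrow> cvec" where
  "lcomb vs c = (\<lambda>i. \<Sum>k<length vs. c k * (vs ! k) i)"

definition lspan :: "cvec list \<Rightarrow> cvec set" where
  "lspan vs = range (lcomb vs)"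

definition lindep_free :: "cvec list \<Rightarrow> bool" where
  "lindep_free vs \<longleftrightarrow> (\<forall>c. lcomb vs c = zv \<longrightarrow> (\<forall>k<length vs. c k = 0))"

definition is_basis :: "nat \<Rightarrow> cvec list \<Rightarrow> bool" where
  "is_basis n vs \<longleftrightarrow> length vs = n \<and> (\<forall>v\<in>set vs. inV n v) \<and> lindep_free vs
      \<and> lspan vs = Vsp n"

definition vdim :: "cvec set \<Rightarrow> nat" where
  "vdim W = (LEAST k. \<exists>vs. length vs = k \<and> W = lspan vs)"

text \<open>Linear relations: subspaces of V \<oplus> V, elements are pairs.\<close>
definition pcomb :: "(cvec \<times> cvec) list \<Rightarrow> (nat \<Rightarrow> complex) \<Rightarrow> cvec \<times> cvec" where
  "pcomb ps c = (lcomb (map fst ps) c, lcomb (map snd ps) c)"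

definition pspan :: "(cvec \<times> cvec) list \<Rightarrow> (cvec \<times> cvec) set" where
  "pspan ps = range (pcomb ps)"

definition rel_ndim :: "nat \<Rightarrow> (cvec \<times> cvec) set \<Rightarrow> bool" where
  "rel_ndim n P \<longleftrightarrow> (\<exists>ps. length ps = n \<and> (\<forall>p\<in>set ps. inV n (fst p) \<and> inV n (snd p))
      \<and> (\<forall>c. pcomb ps c = (zv, zv) \<longrightarrow> (\<forall>k<n. c k = 0)) \<and> P = pspan ps)"

definition Ker :: "(cvec \<times> cvec) set \<Rightarrow> cvec set" where
  "Ker P = {v. (v, zv) \<in> P}"
definition Indef :: "(cvec \<times> cvec) set \<Rightarrow> cvec set" where
  "Indef P = {w. (zv, w) \<in> P}"
definition Dom :: "(cvec \<times> cvec) set \<Rightarrow> cvec set" where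
  "Dom P = fst ` P"
definition Im :: "(cvec \<times> cvec) set \<Rightarrow> cvec set" where
  "Im P = snd ` P"
definition rk :: "(cvec \<times> cvec) set \<Rightarrow> nat" where
  "rk P = vdim (Dom P) - vdim (Ker P)"

definition hinge :: "nat \<Rightarrow> (cvec \<times> cvec) set list \<Rightarrow> bool" where
  "hinge n Ps \<longleftrightarrow> Ps \<noteq> [] \<and> (\<forall>P\<in>set Ps. rel_ndim n P \<and> rk P > 0)
     \<and> (\<forall>j. Suc j < length Ps \<longrightarrow> Ker (Ps ! j) = Dom (Ps ! Suc j) \<and> Im (Ps ! j) = Indef (Ps ! Suc j))
     \<and> Dom (hd Ps) = Vsp n \<and> Im (last Ps) = Vsp n"

text \<open>Exterior powers: Lambda^m V has basis e_S, S an m-subset of {..<n};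
 vectors/matrices are given by coordinates w.r.t. this basis.\<close>
definition ksub :: "nat \<Rightarrow> nat \<Rightarrow> nat set set" where
  "ksub n m = {S. S \<subseteq> {..<n} \<and> card S = m}"

text \<open>Coordinate of e_S in v_1 \<and> ... \<and> v_m.\<close>
definition wedge :: "cvec list \<Rightarrow> nat set \<Rightarrow> complex" where
  "wedge vs S = det (mat (length vs) (length vs)
       (\<lambda>(i, k). (vs ! k) (sorted_list_of_set S ! i)))"

definition subl :: "cvec list \<Rightarrow> nat set \<Rightarrow> cvec list" where
  "subl vs I = map (\<lambda>i. vs ! i) (sorted_list_of_set I)"

text \<open>M (a matrix on Lambda^m V) is a representative of lambda^m(P) (defined up to scalar),
 for some choice of adapted bases f,g,h and F,G,H.  The basis monomials of Lambda^m V built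
 from the basis f@g@h are indexed by m-subsets I of {..<n}; the monomial
 f_1..f_a g_{i_1}..g_{i_s} corresponds to {..<a} \<subseteq> I \<subseteq> {..<a+b}.\<close>
definition lamP :: "nat \<Rightarrow> (cvec \<times> cvec) set \<Rightarrow> nat \<Rightarrow> (nat set \<Rightarrow> nat set \<Rightarrow> complex) \<Rightarrow> bool" where
  "lamP n P m M \<longleftrightarrow> (\<exists>fs gs hs Fs Gs Hs.
      length fs = length Fs \<and> length gs = length Gs \<and> length hs = length Hs
    \<and> is_basis n (fs @ gs @ hs) \<and> is_basis n (Fs @ Gs @ Hs)
    \<and> P = pspan (map (\<lambda>F. (zv, F)) Fs @ zip gs Gs @ map (\<lambda>h. (h, zv)) hs)
    \<and> (\<forall>I\<in>ksub n m. \<forall>T\<in>ksub n m.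
         (\<Sum>S\<in>ksub n m. M T S * wedge (subl (fs @ gs @ hs) I) S)
         = (if {..<length fs} \<subseteq> I \<and> I \<subseteq> {..<length fs + length gs}
            then wedge (subl (Fs @ Gs @ Hs) I) T else 0)))"

text \<open>The set Hinge~_n: tuples A = (A_0, ..., A_n), A m a matrix on Lambda^m V.\<close>
definition hinge_tuple :: "nat \<Rightarrow> (nat \<Rightarrow> nat set \<Rightarrow> nat set \<Rightarrow> complex) \<Rightarrow> bool" where
  "hinge_tuple n A \<longleftrightarrow> (\<exists>Ps. hinge n Ps \<and>
     (\<forall>m\<le>n. \<exists>j<length Ps. \<exists>M. lamP n (Ps ! j) m M
        \<and> (\<exists>T\<in>ksub n m. \<exists>S\<in>ksub n m. M T S \<noteq> 0)
        \<and> (\<exists>c. \<forall>T\<in>ksub n m. \<forall>S\<in>ksub n m. A m T S = c * M T S)))"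

text \<open>Tensor space: the list of degrees of the factors Lambda^j V in H_nu (nu indexed 1..n).\<close>
definition degs :: "nat \<Rightarrow> (nat \<Rightarrow> nat) \<Rightarrow> nat list" where
  "degs n nu = concat (map (\<lambda>j. replicate (nu j - (if j = n then 0 else nu (Suc j))) j) [1..<Suc n])"

definition tb :: "nat \<Rightarrow> nat list \<Rightarrow> nat set list set" where
  "tb n ds = {Ss. length Ss = length ds \<and> (\<forall>k<length ds. Ss ! k \<in> ksub n (ds ! k))}"

definition rnu :: "nat \<Rightarrow> nat list \<Rightarrow> (nat \<Rightarrow> nat set \<Rightarrow> nat set \<Rightarrow> complex)
    \<Rightarrow> (nat set list \<Rightarrow> complex) \<Rightarrow> (nat set list \<Rightarrow> complex)" where
  "rnu n ds A x = (\<lambda>Ts. if Ts \<in> tb n ds then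
      (\<Sum>Ss\<in>tb n ds. (\<Prod>k<length ds. A (ds ! k) (Ts ! k) (Ss ! k)) * x Ss) else 0)"

definition Xi :: "nat list \<Rightarrow> (nat set list \<Rightarrow> complex)" where
  "Xi ds = (\<lambda>Ss. if Ss = map (\<lambda>d. {..<d}) ds then 1 else 0)"

definition lam_cha :: "(nat \<Rightarrow> nat \<Rightarrow> complex) \<Rightarrow> nat \<Rightarrow> nat set \<Rightarrow> nat set \<Rightarrow> complex" where
  "lam_cha g m T S = det (mat m m (\<lambda>(i, k). g (sorted_list_of_set T ! i) (sorted_list_of_set S ! k)))"

definition GLn :: "nat \<Rightarrow> (nat \<Rightarrow> nat \<Rightarrow> complex) set" where
  "GLn n = {g. det (mat n n (\<lambda>(i, k). g i k)) \<noteq> 0}"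

definition cspan :: "('a \<Rightarrow> complex) set \<Rightarrow> ('a \<Rightarrow> complex) set" where
  "cspan X = {x. \<exists>F c. finite F \<and> F \<subseteq> X \<and> x = (\<lambda>i. \<Sum>v\<in>F. c v * v i)}"

definition Hnu :: "nat \<Rightarrow> (nat \<Rightarrow> nat) \<Rightarrow> (nat set list \<Rightarrow> complex) set" where
  "Hnu n nu = cspan {rnu n (degs n nu) (lam_cha g) (Xi (degs n nu)) | g. g \<in> GLn n}"

end

theory Submission
  imports Defs "Jordan_Normal_Form.Gauss_Jordan_Elimination"
begin


definition dd :: "nat \<Rightarrow> (nat \<Rightarrow> cvec) \<Rightarrow> (nat \<Rightarrow> nat) \<Rightarrow> complex" where
  "dd m u r = det (mat m m (\<lambda>(i,k). u k (r i)))"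

lemma dd_transpose: "dd m u r = det (mat\<^sub>r m m (\<lambda>k. vec m (\<lambda>i. u k (r i))))"
proof -
  have "dd m u r = det (transpose_mat (mat m m (\<lambda>(i,k). u k (r i))))"
    unfolding dd_def by (rule det_transpose[symmetric], auto)
  also have "transpose_mat (mat m m (\<lambda>(i,k). u k (r i))) = mat\<^sub>r m m (\<lambda>k. vec m (\<lambda>i. u k (r i)))"
    by (rule eq_matI, auto simp: mat_of_rows_def)
  finally show ?thesis .
qed

definition FF :: "nat \<Rightarrow> nat \<Rightarrow> (nat \<Rightarrow> nat) set" where
  "FF m N = {f. (\<forall>i\<in>{0..<m}. f i \<in> {0..<N}) \<and> (\<forall>i. i \<notin> {0..<m} \<longrightarrow> f i = i)}"

lemma finite_FF: "finite (FF m N)"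
  unfolding FF_def by (rule finite_bounded_functions, auto)

lemma dd_expand:
  "dd m (\<lambda>k x. \<Sum>l<N. \<alpha> l k * b l x) r = (\<Sum>f\<in>FF m N. (\<Prod>k<m. \<alpha> (f k) k) * dd m (\<lambda>k. b (f k)) r)"
proof -
  let ?a = "\<lambda>k l. \<alpha> l k \<cdot>\<^sub>v vec m (\<lambda>i. b l (r i))"
  have rows: "vec m (\<lambda>i. \<Sum>l<N. \<alpha> l k * b l (r i)) = finsum_vec TYPE(complex) m (?a k) {0..<N}" for k
  proof -
    have c: "finsum_vec TYPE(complex) m (?a k) {0..<N} \<in> carrier_vec m"
      by (rule finsum_vec_closed, auto)
    show ?thesis
      by (rule eq_vecI, insert c, subst index_finsum_vec, auto simp: lessThan_atLeast0)
  qed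
  have "dd m (\<lambda>k x. \<Sum>l<N. \<alpha> l k * b l x) r = det (mat\<^sub>r m m (\<lambda>k. finsum_vec TYPE(complex) m (?a k) {0..<N}))"
    unfolding dd_transpose rows ..
  also have "\<dots> = (\<Sum>f\<in>FF m N. det (mat\<^sub>r m m (\<lambda>k. ?a k (f k))))"
    unfolding FF_def by (rule det_linear_rows_sum, auto)
  also have "\<dots> = (\<Sum>f\<in>FF m N. (\<Prod>k<m. \<alpha> (f k) k) * dd m (\<lambda>k. b (f k)) r)"
  proof (rule sum.cong[OF refl])
    fix f
    have "det (mat\<^sub>r m m (\<lambda>k. ?a k (f k))) = prod (\<lambda>k. \<alpha> (f k) k) {0..<m} * det (mat\<^sub>r m m (\<lambda>k. vec m (\<lambda>i. b (f k) (r i))))"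
      by (rule det_rows_mul, auto)
    then show "det (mat\<^sub>r m m (\<lambda>k. ?a k (f k))) = (\<Prod>k<m. \<alpha> (f k) k) * dd m (\<lambda>k. b (f k)) r"
      unfolding dd_transpose by (simp add: lessThan_atLeast0)
  qed
  finally show ?thesis .
qed

lemma dd_perm:
  assumes p: "p permutes {0..<m}"
  shows "dd m (\<lambda>k. u (p k)) r = signof p * dd m u r"
proof -
  have "dd m (\<lambda>k. u (p k)) r = det (mat\<^sub>r m m (\<lambda>k. vec m (\<lambda>i. u (p k) (r i))))"
    by (rule dd_transpose)
  also have "mat\<^sub>r m m (\<lambda>k. vec m (\<lambda>i. u (p k) (r i))) = mat m m (\<lambda>(i,j). (mat\<^sub>r m m (\<lambda>k. vec m (\<lambda>i. u k (r i)))) $$ (p i, j))"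
    using permutes_in_image[OF p] by (intro eq_matI, auto simp: mat_of_rows_def)
  also have "det \<dots> = signof p * det (mat\<^sub>r m m (\<lambda>k. vec m (\<lambda>i. u k (r i))))"
    by (rule det_permute_rows[OF _ p], auto)
  finally show ?thesis unfolding dd_transpose .
qed

lemma dd_mult:
  "dd m (\<lambda>k x. \<Sum>j<m. Z j k * u j x) r = dd m u r * det (mat m m (\<lambda>(j,k). Z j k))"
proof -
  have "mat m m (\<lambda>(i,k). \<Sum>j<m. Z j k * u j (r i)) = mat m m (\<lambda>(i,k). u k (r i)) * mat m m (\<lambda>(j,k). Z j k)"
    by (rule eq_matI, auto simp: scalar_prod_def lessThan_atLeast0 mult.commute intro!: sum.cong)
  then show ?thesis unfolding dd_def
    by (simp add: det_mult[of _ m])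
qed

lemma dd_dep:
  assumes c: "\<And>i. i < m \<Longrightarrow> (\<Sum>k<m. c k * u k (r i)) = 0" and k0: "k0 < m" "c k0 \<noteq> 0"
  shows "dd m u r = 0"
proof -
  let ?A = "mat m m (\<lambda>(i,k). u k (r i))"
  have "?A *\<^sub>v vec m c = 0\<^sub>v m"
    by (rule eq_vecI, auto simp: scalar_prod_def lessThan_atLeast0 mult.commute c[unfolded lessThan_atLeast0])
  moreover have "vec m c \<noteq> 0\<^sub>v m" using k0
    by (metis index_vec index_zero_vec(1))
  ultimately have "det ?A = 0"
    by (subst det_0_iff_vec_prod_zero[of _ m], auto intro!: exI[of _ "vec m c"])
  then show ?thesis unfolding dd_def .
qed

lemma dd_same_col:
  assumes "k1 < m" "k2 < m" "k1 \<noteq> k2" "u k1 = u k2"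
  shows "dd m u r = 0"
proof (rule dd_dep[of m "\<lambda>k. if k = k1 then 1 else if k = k2 then -1 else 0" u r k1])
  fix i assume "i < m"
  have "(\<Sum>k<m. (if k = k1 then 1 else if k = k2 then -1 else 0) * u k (r i)) =
     (\<Sum>k\<in>{k1,k2}. (if k = k1 then 1 else if k = k2 then -1 else 0) * u k (r i))"
    by (rule sum.mono_neutral_right, use assms in auto)
  also have "\<dots> = 0" using assms by simp
  finally show "(\<Sum>k<m. (if k = k1 then 1 else if k = k2 then -1 else 0) * u k (r i)) = 0" .
qed (use assms in auto)



abbreviation sl :: "nat set \<Rightarrow> nat list" where "sl S \<equiv> sorted_list_of_set S"

lemma wedge_map: "wedge (map u [0..<m]) S = dd m u ((!) (sl S))"
  unfolding wedge_def dd_def by (intro arg_cong[where f=det] eq_matI, auto)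

lemma subl_map: "finite I \<Longrightarrow> subl vs I = map (\<lambda>k. vs ! (sl I ! k)) [0..<card I]"
  unfolding subl_def by (rule nth_equalityI, auto)

lemma wedge_subl: "finite I \<Longrightarrow> wedge (subl vs I) S = dd (card I) (\<lambda>k. vs ! (sl I ! k)) ((!) (sl S))"
  by (simp add: subl_map wedge_map)

lemma lam_cha_dd: "lam_cha g m T {..<m} = dd m (\<lambda>k x. g x k) ((!) (sl T))"
  unfolding lam_cha_def dd_def by (intro arg_cong[where f=det] eq_matI, auto simp: lessThan_atLeast0)

lemma ksub_finite: "finite (ksub n m)"
  unfolding ksub_def by (rule finite_subset[of _ "Pow {..<n}"], auto)

lemma ksub_elem_finite: "S \<in> ksub n m \<Longrightarrow> finite S"
  unfolding ksub_def by (auto intro: finite_subset)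

lemma perm_sign:
  assumes inj: "inj_on f {0..<m}"
  shows "\<exists>s. \<forall>b r. dd m (\<lambda>k. b (f k)) r = s * dd m (\<lambda>k. b (sl (f ` {0..<m}) ! k)) r"
proof -
  let ?I = "f ` {0..<m}"
  have fin: "finite ?I" by auto
  have cI: "card ?I = m" using card_image[OF inj] by simp
  have bh: "bij_betw ((!) (sl ?I)) {0..<m} ?I"
    by (rule bij_betw_nth, auto simp: cI lessThan_atLeast0)
  have bf: "bij_betw f {0..<m} ?I" using inj by (simp add: bij_betw_def)
  define \<tau> where "\<tau> k = (if k < m then inv_into {0..<m} ((!) (sl ?I)) (f k) else k)" for k
  have b1: "bij_betw (inv_into {0..<m} ((!) (sl ?I)) \<circ> f) {0..<m} {0..<m}"
    by (rule bij_betw_trans[OF bf bij_betw_inv_into[OF bh]])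
  have "bij_betw \<tau> {0..<m} {0..<m}"
    by (rule bij_betw_cong[THEN iffD1, OF _ b1], auto simp: \<tau>_def)
  then have p: "\<tau> permutes {0..<m}"
    by (rule bij_imp_permutes, auto simp: \<tau>_def)
  have ft: "sl ?I ! (\<tau> k) = f k" if "k < m" for k
    using that unfolding \<tau>_def
    by (auto intro!: f_inv_into_f[where f="(!) (sl ?I)"] simp: bij_betw_imp_surj_on[OF bh])
  show ?thesis
  proof (intro exI allI)
    fix b :: "nat \<Rightarrow> cvec" and r
    have "dd m (\<lambda>k. b (f k)) r = dd m (\<lambda>k. (\<lambda>j. b (sl ?I ! j)) (\<tau> k)) r"
      unfolding dd_def using ft by (intro arg_cong[where f=det] eq_matI, auto)
    also have "\<dots> = signof \<tau> * dd m (\<lambda>j. b (sl ?I ! j)) r"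
      by (rule dd_perm[OF p])
    finally show "dd m (\<lambda>k. b (f k)) r = signof \<tau> * dd m (\<lambda>k. b (sl (f ` {0..<m}) ! k)) r" .
  qed
qed

lemma FF_inj_ksub:
  assumes f: "f \<in> FF m N" and inj: "inj_on f {0..<m}"
  shows "f ` {0..<m} \<in> ksub N m"
  using f card_image[OF inj] unfolding FF_def ksub_def by auto

lemma FF_noninj:
  assumes "\<not> inj_on f {0..<m}"
  shows "dd m (\<lambda>k. b (f k)) r = 0"
proof -
  from assms obtain k1 k2 where "k1 < m" "k2 < m" "k1 \<noteq> k2" "f k1 = f k2"
    unfolding inj_on_def by auto
  then show ?thesis by (intro dd_same_col[of k1 m k2], auto)
qed

lemma key_formula:
  assumes len: "length bs = n" "length Bs = n"
    and M: "\<forall>I\<in>ksub n m. \<forall>T\<in>ksub n m.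
         (\<Sum>S\<in>ksub n m. M T S * wedge (subl bs I) S)
         = (if {..<a} \<subseteq> I \<and> I \<subseteq> {..<a + b} then wedge (subl Bs I) T else 0)"
    and T: "T \<in> ksub n m"
  shows "(\<Sum>S\<in>ksub n m. M T S * dd m (\<lambda>k x. \<Sum>l<n. \<alpha> l k * (bs ! l) x) ((!) (sl S)))
   = (\<Sum>f\<in>FF m n. (\<Prod>k<m. \<alpha> (f k) k) *
        (if {..<a} \<subseteq> f ` {0..<m} \<and> f ` {0..<m} \<subseteq> {..<a + b} then dd m (\<lambda>k. Bs ! (f k)) ((!) (sl T)) else 0))"
proof -
  have "(\<Sum>S\<in>ksub n m. M T S * dd m (\<lambda>k x. \<Sum>l<n. \<alpha> l k * (bs ! l) x) ((!) (sl S)))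
     = (\<Sum>S\<in>ksub n m. \<Sum>f\<in>FF m n. M T S * ((\<Prod>k<m. \<alpha> (f k) k) * dd m (\<lambda>k. bs ! (f k)) ((!) (sl S))))"
    by (simp add: dd_expand[where N=n and b="\<lambda>l. bs ! l"] sum_distrib_left)
  also have "\<dots> = (\<Sum>f\<in>FF m n. (\<Prod>k<m. \<alpha> (f k) k) * (\<Sum>S\<in>ksub n m. M T S * dd m (\<lambda>k. bs ! (f k)) ((!) (sl S))))"
    by (subst sum.swap, simp add: sum_distrib_left mult.assoc mult.left_commute)
  also have "\<dots> = (\<Sum>f\<in>FF m n. (\<Prod>k<m. \<alpha> (f k) k) *
        (if {..<a} \<subseteq> f ` {0..<m} \<and> f ` {0..<m} \<subseteq> {..<a + b} then dd m (\<lambda>k. Bs ! (f k)) ((!) (sl T)) else 0))"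
  proof (rule sum.cong[OF refl])
    fix f assume f: "f \<in> FF m n"
    show "(\<Prod>k<m. \<alpha> (f k) k) * (\<Sum>S\<in>ksub n m. M T S * dd m (\<lambda>k. bs ! (f k)) ((!) (sl S))) =
         (\<Prod>k<m. \<alpha> (f k) k) *
        (if {..<a} \<subseteq> f ` {0..<m} \<and> f ` {0..<m} \<subseteq> {..<a + b} then dd m (\<lambda>k. Bs ! (f k)) ((!) (sl T)) else 0)"
    proof (cases "inj_on f {0..<m}")
      case False
      then show ?thesis by (simp add: FF_noninj)
    next
      case True
      let ?I = "f ` {0..<m}"
      have I: "?I \<in> ksub n m" by (rule FF_inj_ksub[OF f True])
      have cI: "card ?I = m" using card_image[OF True] by simp
      obtain s where s: "\<And>b r. dd m (\<lambda>k. b (f k)) r = s * dd m (\<lambda>k. b (sl ?I ! k)) r"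
        using perm_sign[OF True] by blast
      have "(\<Sum>S\<in>ksub n m. M T S * dd m (\<lambda>k. bs ! (f k)) ((!) (sl S)))
          = s * (\<Sum>S\<in>ksub n m. M T S * wedge (subl bs ?I) S)"
        unfolding s[of "\<lambda>l. bs ! l"] wedge_subl[OF finite_imageI[OF finite_atLeastLessThan]] cI
        by (simp add: sum_distrib_left mult.left_commute)
      also have "\<dots> = (if {..<a} \<subseteq> ?I \<and> ?I \<subseteq> {..<a + b} then dd m (\<lambda>k. Bs ! (f k)) ((!) (sl T)) else 0)"
      proof -
        have e: "(\<Sum>S\<in>ksub n m. M T S * wedge (subl bs ?I) S) = (if {..<a} \<subseteq> ?I \<and> ?I \<subseteq> {..<a + b} then wedge (subl Bs ?I) T else 0)"
          using M I T by blast
        have w: "wedge (subl Bs ?I) T = dd m (\<lambda>k. Bs ! (sl ?I ! k)) ((!) (sl T))"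
          using wedge_subl[OF finite_imageI[OF finite_atLeastLessThan]] cI by simp
        show ?thesis unfolding e w s[of "\<lambda>l. Bs ! l"] by simp
      qed
      finally show ?thesis by simp
    qed
  qed
  finally show ?thesis .
qed



definition lc :: "nat \<Rightarrow> (nat \<Rightarrow> complex) \<Rightarrow> (nat \<Rightarrow> cvec) \<Rightarrow> cvec" where
  "lc N c v = (\<lambda>x. \<Sum>l<N. c l * v l x)"

definition spn :: "nat \<Rightarrow> (nat \<Rightarrow> cvec) \<Rightarrow> cvec set" where
  "spn m u = range (\<lambda>c. lc m c u)"

lemma lc_lc: "lc M c (\<lambda>k. lc N (d k) v) = lc N (\<lambda>l. \<Sum>k<M. c k * d k l) v"
  unfolding lc_def
  by (rule ext, simp add: sum_distrib_left sum_distrib_right mult.assoc, rule sum.swap)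

lemma lc_cong: "(\<And>l. l < N \<Longrightarrow> c l = d l) \<Longrightarrow> (\<And>l. l < N \<Longrightarrow> v l = w l) \<Longrightarrow> lc N c v = lc N d w"
  unfolding lc_def by (rule ext, rule sum.cong, auto)

lemma lcomb_lc: "lcomb vs c = lc (length vs) c ((!) vs)"
  unfolding lcomb_def lc_def by simp

lemma lc_diff: "(\<lambda>x. lc N c v x - lc N d v x) = lc N (\<lambda>l. c l - d l) v"
  unfolding lc_def by (rule ext, simp add: sum_subtractf left_diff_distrib)

lemma lc_inV: "(\<And>l. l < N \<Longrightarrow> inV n (v l)) \<Longrightarrow> inV n (lc N c v)"
  unfolding inV_def lc_def by simp

lemma lc_unique:
  assumes "lindep_free bs" "length bs = n" "lc n c ((!) bs) = lc n d ((!) bs)" "l < n"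
  shows "c l = d l"
proof -
  have "lcomb bs (\<lambda>l. c l - d l) = zv"
    using assms(2,3) unfolding lcomb_lc zv_def lc_diff[symmetric] by (simp add: fun_eq_iff)
  then show ?thesis using assms(1,2,4) unfolding lindep_free_def by force
qed

lemma basis_coords:
  assumes "is_basis n bs" "inV n v"
  shows "\<exists>c. v = lc n c ((!) bs)"
proof -
  have "v \<in> lspan bs" using assms unfolding is_basis_def Vsp_def by auto
  then show ?thesis using assms(1) unfolding lspan_def is_basis_def lcomb_lc by auto
qed

lemma basis_coords_fam:
  assumes "is_basis n bs" "\<And>k. k < m \<Longrightarrow> inV n (u k)"
  shows "\<exists>\<alpha>. \<forall>k<m. u k = lc n (\<lambda>l. \<alpha> l k) ((!) bs)"
proof -
  have "\<forall>k. \<exists>c. k < m \<longrightarrow> u k = lc n c ((!) bs)" using basis_coords[OF assms(1) assms(2)] by blast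
  then obtain C where "\<forall>k. k < m \<longrightarrow> u k = lc n (C k) ((!) bs)" by metis
  then show ?thesis by (intro exI[of _ "\<lambda>l k. C k l"], auto)
qed

lemma dd_cong: "(\<And>k. k < m \<Longrightarrow> u k = v k) \<Longrightarrow> dd m u r = dd m v r"
  unfolding dd_def by (intro arg_cong[where f=det] eq_matI, auto)

lemma dd_lc: "dd m (\<lambda>k. lc N (\<lambda>l. \<alpha> l k) b) r = (\<Sum>f\<in>FF m N. (\<Prod>k<m. \<alpha> (f k) k) * dd m (\<lambda>k. b (f k)) r)"
  unfolding lc_def by (rule dd_expand)

lemma echelon_obtain:
  fixes \<alpha> :: "nat \<Rightarrow> nat \<Rightarrow> complex"
  shows "\<exists>\<alpha>' p Qm Pm.
    (\<forall>k<m. \<forall>l<n. \<alpha> l k = (\<Sum>j<m. Qm k j * \<alpha>' l j)) \<and>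
    (\<forall>j<m. \<forall>l<n. \<alpha>' l j = (\<Sum>k<m. Pm j k * \<alpha> l k)) \<and>
    (\<forall>k<m. p k \<le> n) \<and>
    (\<forall>k<m. \<forall>l<n. l < p k \<longrightarrow> \<alpha>' l k = 0) \<and>
    (\<forall>k<m. p k < n \<longrightarrow> \<alpha>' (p k) k = 1 \<and> (\<forall>k'<m. k' \<noteq> k \<longrightarrow> \<alpha>' (p k) k' = 0)) \<and>
    (\<forall>k. Suc k < m \<longrightarrow> p k < p (Suc k) \<or> p (Suc k) = n)"
proof -
  define A where "A = mat m n (\<lambda>(k,l). \<alpha> l k)"
  have A: "A \<in> carrier_mat m n" unfolding A_def by simp
  define C where "C = gauss_jordan_single A"
  note gj = gauss_jordan_single[OF A C_def[symmetric]]
  from gj(4) obtain P Q where CPA: "C = P * A" and P: "P \<in> carrier_mat m m" and Q: "Q \<in> carrier_mat m m"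
    and QP: "Q * P = 1\<^sub>m m" by blast
  have C: "C \<in> carrier_mat m n" by (rule gj(2))
  from gj(3) obtain p where piv: "pivot_fun C p n" unfolding row_echelon_form_def using C by auto
  have AQC: "A = Q * C"
  proof -
    have "A = 1\<^sub>m m * A" using A by simp
    also have "\<dots> = (Q * P) * A" using QP by simp
    also have "\<dots> = Q * (P * A)" using Q P A by (simp add: assoc_mult_mat)
    finally show ?thesis using CPA by simp
  qed
  note pd = pivot_funD[OF _ piv, of m]
  have e1: "\<forall>k<m. \<forall>l<n. \<alpha> l k = (\<Sum>j<m. Q $$ (k,j) * C $$ (j,l))"
  proof (intro allI impI)
    fix k l assume "k < m" "l < n"
    then have "\<alpha> l k = A $$ (k,l)" unfolding A_def by simp
    also have "\<dots> = (Q * C) $$ (k,l)" using AQC by simp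
    also have "\<dots> = (\<Sum>j<m. Q $$ (k,j) * C $$ (j,l))" using Q C \<open>k<m\<close> \<open>l<n\<close>
      by (simp add: scalar_prod_def lessThan_atLeast0)
    finally show "\<alpha> l k = (\<Sum>j<m. Q $$ (k,j) * C $$ (j,l))" .
  qed
  have e2: "\<forall>j<m. \<forall>l<n. C $$ (j,l) = (\<Sum>k<m. P $$ (j,k) * \<alpha> l k)"
    using CPA P A by (simp add: scalar_prod_def lessThan_atLeast0 A_def)
  have e3: "(\<forall>k<m. p k \<le> n) \<and>
    (\<forall>k<m. \<forall>l<n. l < p k \<longrightarrow> C $$ (k,l) = 0) \<and>
    (\<forall>k<m. p k < n \<longrightarrow> C $$ (k, p k) = 1 \<and> (\<forall>k'<m. k' \<noteq> k \<longrightarrow> C $$ (k', p k) = 0)) \<and>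
    (\<forall>k. Suc k < m \<longrightarrow> p k < p (Suc k) \<or> p (Suc k) = n)"
    using pd C by auto
  show ?thesis
    by (rule exI[of _ "\<lambda>l k. C $$ (k,l)"], rule exI[of _ p], rule exI[of _ "\<lambda>k j. Q $$ (k,j)"],
        rule exI[of _ "\<lambda>j k. P $$ (j,k)"], insert e1 e2 e3, simp)
qed



definition ech :: "nat \<Rightarrow> nat \<Rightarrow> (nat \<Rightarrow> nat \<Rightarrow> complex) \<Rightarrow> (nat \<Rightarrow> nat) \<Rightarrow> bool" where
  "ech m n \<alpha>' p \<longleftrightarrow> (\<forall>k<m. p k < n) \<and> (\<forall>k<m. \<forall>l<n. l < p k \<longrightarrow> \<alpha>' l k = 0)
     \<and> (\<forall>k<m. \<alpha>' (p k) k = 1 \<and> (\<forall>k'<m. k' \<noteq> k \<longrightarrow> \<alpha>' (p k) k' = 0))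
     \<and> (\<forall>i j. i < j \<longrightarrow> j < m \<longrightarrow> p i < p j)"

lemma ech_ge: assumes "ech m n \<alpha>' p" shows "k < m \<Longrightarrow> k \<le> p k"
proof (induction k)
  case (Suc k)
  then have "p k < p (Suc k)" using assms unfolding ech_def by auto
  with Suc show ?case by auto
qed auto

lemma ech_2a:
  assumes e: "ech m n \<alpha>' p" and f: "f \<in> FF m n" and inj: "inj_on f {0..<m}"
    and sub: "{..<a} \<subseteq> f ` {0..<m}" and nz: "(\<Prod>k<m. \<alpha>' (f k) k) \<noteq> 0"
  shows "a \<le> m \<and> (\<forall>k<a. f k = k) \<and> (\<forall>k<a. p k = k)"
proof -
  have nz': "\<alpha>' (f k) k \<noteq> 0" if "k < m" for k using nz that by (auto simp: prod_zero_iff)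
  have fn: "f k < n" if "k < m" for k using f that unfolding FF_def by auto
  have ge: "p k \<le> f k" if "k < m" for k
  proof (rule ccontr)
    assume "\<not> p k \<le> f k"
    then have "\<alpha>' (f k) k = 0" using e fn[OF that] that unfolding ech_def by auto
    with nz'[OF that] show False by simp
  qed
  have kf: "k \<le> f k" if "k < m" for k using ge[OF that] ech_ge[OF e that] by simp
  define K where "K = {k\<in>{0..<m}. f k < a}"
  have fK: "f ` K = {..<a}" using sub unfolding K_def by force
  have injK: "inj_on f K" using inj unfolding K_def by (rule inj_on_subset, auto)
  have cK: "card K = a" using card_image[OF injK] fK by simp
  have Ka: "K \<subseteq> {..<a}" unfolding K_def using kf by force
  have Keq: "K = {..<a}" by (rule card_subset_eq[OF _ Ka], auto simp: cK)
  have am: "a \<le> m" using cK unfolding K_def by (metis (no_types, lifting) card_atLeastLessThan card_mono finite_atLeastLessThan mem_Collect_eq subsetI diff_zero)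
  have fa: "f ` {..<a} = {..<a}" using fK Keq by simp
  have inja: "inj_on f {..<a}" using injK Keq by simp
  have fid: "\<forall>k<a. f k = k"
  proof (rule ccontr)
    assume "\<not> (\<forall>k<a. f k = k)"
    then obtain k0 where k0: "k0 < a" "f k0 \<noteq> k0" by auto
    have "(\<Sum>k<a. k) < (\<Sum>k<a. f k)"
    proof (rule sum_strict_mono_ex1)
      show "\<forall>x\<in>{..<a}. x \<le> f x" using kf am by auto
      have "k0 \<le> f k0" using kf am k0 by auto
      then show "\<exists>x\<in>{..<a}. x < f x" using k0 by (intro bexI[of _ k0], auto)
    qed auto
    also have "(\<Sum>k<a. f k) = (\<Sum>j\<in>f ` {..<a}. j)" by (simp add: sum.reindex[OF inja])
    also have "\<dots> = (\<Sum>k<a. k)" using fa by simp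
    finally show False by simp
  qed
  have "\<forall>k<a. p k = k" using fid ge ech_ge[OF e] am by (metis le_antisym less_le_trans)
  with am fid show ?thesis by simp
qed

lemma ech_rows:
  assumes e: "ech m n \<alpha>' p" and am: "a \<le> m" and pa: "\<forall>k<a. p k = k" and l: "l < a" and k: "k < m"
  shows "\<alpha>' l k = (if l = k then 1 else 0)"
proof -
  have "l = p l" using pa l by simp
  then show ?thesis using e l k am unfolding ech_def by (metis less_le_trans)
qed

definition betaf :: "nat \<Rightarrow> nat \<Rightarrow> (nat \<Rightarrow> nat \<Rightarrow> complex) \<Rightarrow> nat \<Rightarrow> nat \<Rightarrow> complex" where
  "betaf a b \<alpha>' l k = (if k < a then (if l = k then 1 else 0) else if a \<le> l \<and> l < a + b then \<alpha>' l k else 0)"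

lemma ech_2b:
  assumes e: "ech m n \<alpha>' p" and am: "a \<le> m" and pa: "\<forall>k<a. p k = k"
    and f: "f \<in> FF m n" and inj: "inj_on f {0..<m}"
  shows "(\<Prod>k<m. \<alpha>' (f k) k) * (if {..<a} \<subseteq> f ` {0..<m} \<and> f ` {0..<m} \<subseteq> {..<a + b} then 1 else 0)
       = (\<Prod>k<m. betaf a b \<alpha>' (f k) k)"
proof -
  let ?c = "{..<a} \<subseteq> f ` {0..<m} \<and> f ` {0..<m} \<subseteq> {..<a + b}"
  have fn: "f k < n" if "k < m" for k using f that unfolding FF_def by auto
  have A: "?c \<and> (\<Prod>k<m. betaf a b \<alpha>' (f k) k) = (\<Prod>k<m. \<alpha>' (f k) k)"
    if nzb: "(\<Prod>k<m. betaf a b \<alpha>' (f k) k) \<noteq> 0"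
  proof -
    have nz: "betaf a b \<alpha>' (f k) k \<noteq> 0" if "k < m" for k using nzb that by (auto simp: prod_zero_iff)
    have f1: "f k = k" if "k < a" for k using nz[of k] that am unfolding betaf_def by (auto split: if_splits)
    have f2: "a \<le> f k \<and> f k < a + b" if "a \<le> k" "k < m" for k using nz[of k] that unfolding betaf_def by (auto split: if_splits)
    have c1: "{..<a} \<subseteq> f ` {0..<m}"
    proof
      fix i assume "i \<in> {..<a}"
      then show "i \<in> f ` {0..<m}" using f1[of i] am by (auto intro!: image_eqI[of _ _ i])
    qed
    have c2: "f ` {0..<m} \<subseteq> {..<a + b}"
    proof
      fix y assume "y \<in> f ` {0..<m}"
      then obtain k where "k < m" "y = f k" by auto
      then show "y \<in> {..<a + b}" using f1[of k] f2[of k] by (cases "k < a", auto)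
    qed
    have "(\<Prod>k<m. betaf a b \<alpha>' (f k) k) = (\<Prod>k<m. \<alpha>' (f k) k)"
    proof (rule prod.cong[OF refl])
      fix k assume "k \<in> {..<m}"
      then show "betaf a b \<alpha>' (f k) k = \<alpha>' (f k) k"
        using f1[of k] f2[of k] ech_rows[OF e am pa, of k k] unfolding betaf_def by (cases "k < a", auto)
    qed
    with c1 c2 show ?thesis by simp
  qed
  have B: "(\<Prod>k<m. betaf a b \<alpha>' (f k) k) = (\<Prod>k<m. \<alpha>' (f k) k)"
    if c: ?c and nza: "(\<Prod>k<m. \<alpha>' (f k) k) \<noteq> 0"
  proof -
    from ech_2a[OF e f inj _ nza] c have h: "\<forall>k<a. f k = k" by auto
    have nz': "\<alpha>' (f k) k \<noteq> 0" if "k < m" for k using nza that by (auto simp: prod_zero_iff)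
    have ge: "a \<le> f k" if "a \<le> k" "k < m" for k
    proof (rule ccontr)
      assume "\<not> a \<le> f k"
      then have "f k < p k" using ech_ge[OF e \<open>k<m\<close>] that by simp
      then have "\<alpha>' (f k) k = 0" using e fn[OF \<open>k<m\<close>] \<open>k<m\<close> unfolding ech_def by auto
      with nz'[OF \<open>k<m\<close>] show False by simp
    qed
    have lt: "f k < a + b" if "k < m" for k using c that by (meson atLeastLessThan_iff image_subset_iff le0 lessThan_iff)
    show ?thesis
    proof (rule prod.cong[OF refl])
      fix k assume "k \<in> {..<m}"
      then show "betaf a b \<alpha>' (f k) k = \<alpha>' (f k) k"
        using h ge[of k] lt[of k] ech_rows[OF e am pa, of k k] unfolding betaf_def by (cases "k < a", auto)
    qed
  qed
  show ?thesis
  proof (cases "(\<Prod>k<m. betaf a b \<alpha>' (f k) k) = 0")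
    case True
    show ?thesis
    proof (cases ?c)
      case c: True
      have z: "(\<Prod>k<m. \<alpha>' (f k) k) = 0"
      proof (rule ccontr)
        assume "(\<Prod>k<m. \<alpha>' (f k) k) \<noteq> 0"
        with B[OF c this] True show False by simp
      qed
      show ?thesis by (simp only: z True mult_zero_left)
    next
      case False
      then show ?thesis by (simp only: True if_False mult_zero_right)
    qed
  next
    case False
    then show ?thesis using A by auto
  qed
qed



definition Rimg :: "(cvec \<times> cvec) set \<Rightarrow> cvec set \<Rightarrow> cvec set" where
  "Rimg P U = {w. \<exists>x\<in>U. (x, w) \<in> P}"

lemma ps_nth:
  assumes "length fs = length Fs" "length gs = length Gs" "length hs = length Hs"
    "l < length fs + length gs + length hs"
  shows "(map (\<lambda>F. (zv, F)) Fs @ zip gs Gs @ map (\<lambda>h. (h, zv)) hs) ! l =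
     (if l < length fs then zv else (fs @ gs @ hs) ! l,
      if l < length fs + length gs then (Fs @ Gs @ Hs) ! l else zv)"
  using assms by (auto simp: nth_append)

lemma pcomb_lc:
  assumes "length fs = length Fs" "length gs = length Gs" "length hs = length Hs"
    "n = length fs + length gs + length hs"
  shows "pcomb (map (\<lambda>F. (zv, F)) Fs @ zip gs Gs @ map (\<lambda>h. (h, zv)) hs) c =
     (lc n (\<lambda>l. if l < length fs then 0 else c l) ((!) (fs @ gs @ hs)),
      lc n (\<lambda>l. if l < length fs + length gs then c l else 0) ((!) (Fs @ Gs @ Hs)))"
proof -
  let ?ps = "map (\<lambda>F. (zv, F)) Fs @ zip gs Gs @ map (\<lambda>h. (h, zv)) hs"
  have len: "length ?ps = n" using assms by simp
  have 1: "lcomb (map fst ?ps) c = lc n (\<lambda>l. if l < length fs then 0 else c l) ((!) (fs @ gs @ hs))"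
    unfolding lcomb_lc lc_def
  proof (rule ext, rule sum.cong)
    fix x l assume "l \<in> {..<n}"
    then have l: "l < n" by simp
    have "map fst ?ps ! l = fst (?ps ! l)" by (rule nth_map, use len l in simp)
    also have "\<dots> = (if l < length fs then zv else (fs @ gs @ hs) ! l)"
      using l assms(4) ps_nth[OF assms(1-3), of l] by simp
    finally show "c l * (map fst ?ps ! l) x = (if l < length fs then 0 else c l) * ((fs @ gs @ hs) ! l) x"
      by (simp add: zv_def)
  qed (use len in simp)
  have 2: "lcomb (map snd ?ps) c = lc n (\<lambda>l. if l < length fs + length gs then c l else 0) ((!) (Fs @ Gs @ Hs))"
    unfolding lcomb_lc lc_def
  proof (rule ext, rule sum.cong)
    fix x l assume "l \<in> {..<n}"
    then have l: "l < n" by simp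
    have "map snd ?ps ! l = snd (?ps ! l)" by (rule nth_map, use len l in simp)
    also have "\<dots> = (if l < length fs + length gs then (Fs @ Gs @ Hs) ! l else zv)"
      using l assms(4) ps_nth[OF assms(1-3), of l] by simp
    finally show "c l * (map snd ?ps ! l) x = (if l < length fs + length gs then c l else 0) * ((Fs @ Gs @ Hs) ! l) x"
      by (simp add: zv_def)
  qed (use len in simp)
  show ?thesis unfolding pcomb_def 1 2 ..
qed

lemma sum_delta_lt: "(\<Sum>k<(m::nat). if k = l then g k else 0) = (if l < m then g l else (0::complex))"
  by (subst sum.delta) auto

lemma span_part:
  assumes lens: "length fs = length Fs" "length gs = length Gs" "length hs = length Hs"
    "n = length fs + length gs + length hs"
    and ab: "a = length fs" "b = length gs"
    and lf: "lindep_free (fs @ gs @ hs)"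
    and am: "a \<le> m"
    and rows: "\<And>l k. l < a \<Longrightarrow> k < m \<Longrightarrow> \<alpha>' l k = (if l = k then 1 else 0)"
  shows "spn m (\<lambda>k. lc n (\<lambda>l. betaf a b \<alpha>' l k) ((!) (Fs @ Gs @ Hs))) =
     Rimg (pspan (map (\<lambda>F. (zv, F)) Fs @ zip gs Gs @ map (\<lambda>h. (h, zv)) hs))
          (spn m (\<lambda>j. lc n (\<lambda>l. \<alpha>' l j) ((!) (fs @ gs @ hs))))"
    (is "spn m ?ws = Rimg (pspan ?ps) (spn m ?us)")
proof
  let ?B = "(!) (Fs @ Gs @ Hs)" and ?b = "(!) (fs @ gs @ hs)"
  note pc = pcomb_lc[OF lens]
  have lenb: "length (fs @ gs @ hs) = n" using lens by simp
  show "spn m ?ws \<subseteq> Rimg (pspan ?ps) (spn m ?us)"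
  proof
    fix w assume "w \<in> spn m ?ws"
    then obtain c where w: "w = lc m c ?ws" unfolding spn_def by auto
    define x where "x = lc m (\<lambda>k. if k < a then 0 else c k) ?us"
    define \<gamma> where "\<gamma> l = (if l < a then c l else (\<Sum>k<m. (if k < a then 0 else c k) * \<alpha>' l k))" for l
    have xs: "x \<in> spn m ?us" unfolding x_def spn_def by auto
    have x2: "x = lc n (\<lambda>l. \<Sum>k<m. (if k < a then 0 else c k) * \<alpha>' l k) ?b"
      unfolding x_def lc_lc ..
    have w2: "w = lc n (\<lambda>l. \<Sum>k<m. c k * betaf a b \<alpha>' l k) ?B"
      unfolding w lc_lc ..
    have "pcomb ?ps \<gamma> = (x, w)"
    proof -
      have "lc n (\<lambda>l. if l < length fs then 0 else \<gamma> l) ?b = x"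
        unfolding x2
      proof (rule lc_cong)
        fix l assume "l < n"
        show "(if l < length fs then 0 else \<gamma> l) = (\<Sum>k<m. (if k < a then 0 else c k) * \<alpha>' l k)"
        proof (cases "l < a")
          case True
          have "(\<Sum>k<m. (if k < a then 0 else c k) * \<alpha>' l k) = 0"
            by (rule sum.neutral, use rows True in auto)
          then show ?thesis using True ab by simp
        qed (use ab \<gamma>_def in auto)
      qed simp
      moreover have "lc n (\<lambda>l. if l < length fs + length gs then \<gamma> l else 0) ?B = w"
        unfolding w2
      proof (rule lc_cong)
        fix l assume "l < n"
        show "(if l < length fs + length gs then \<gamma> l else 0) = (\<Sum>k<m. c k * betaf a b \<alpha>' l k)"
        proof (cases "l < a")
          case True
          have "(\<Sum>k<m. c k * betaf a b \<alpha>' l k) = (\<Sum>k<m. if k = l then c k else 0)"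
            by (rule sum.cong, use True in \<open>auto simp: betaf_def\<close>)
          then show ?thesis using True ab am \<gamma>_def by (simp add: sum_delta_lt)
        next
          case False
          show ?thesis
          proof (cases "l < a + b")
            case True
            have "(\<Sum>k<m. c k * betaf a b \<alpha>' l k) = (\<Sum>k<m. (if k < a then 0 else c k) * \<alpha>' l k)"
              by (rule sum.cong, use True False in \<open>auto simp: betaf_def\<close>)
            then show ?thesis using True False ab \<gamma>_def by simp
          next
            case F2: False
            have "(\<Sum>k<m. c k * betaf a b \<alpha>' l k) = 0"
              by (rule sum.neutral, use False F2 in \<open>auto simp: betaf_def\<close>)
            then show ?thesis using F2 ab by simp
          qed
        qed
      qed simp
      ultimately show ?thesis unfolding pc by (simp add: ab)
    qed
    then have "(x, w) \<in> pspan ?ps" unfolding pspan_def by (metis rangeI)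
    with xs show "w \<in> Rimg (pspan ?ps) (spn m ?us)" unfolding Rimg_def by auto
  qed
  show "Rimg (pspan ?ps) (spn m ?us) \<subseteq> spn m ?ws"
  proof
    fix w assume "w \<in> Rimg (pspan ?ps) (spn m ?us)"
    then obtain x where xs: "x \<in> spn m ?us" and xw: "(x, w) \<in> pspan ?ps" unfolding Rimg_def by auto
    from xw obtain c where "(x, w) = pcomb ?ps c" unfolding pspan_def by auto
    then have x1: "x = lc n (\<lambda>l. if l < a then 0 else c l) ?b"
      and w1: "w = lc n (\<lambda>l. if l < a + b then c l else 0) ?B" unfolding pc ab by auto
    from xs obtain lam where "x = lc m lam ?us" unfolding spn_def by auto
    then have x2: "x = lc n (\<lambda>l. \<Sum>k<m. lam k * \<alpha>' l k) ?b" unfolding lc_lc .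
    have co: "(if l < a then 0 else c l) = (\<Sum>k<m. lam k * \<alpha>' l k)" if "l < n" for l
      by (rule lc_unique[OF lf lenb _ that], use x1 x2 in simp)
    have lz: "lam l = 0" if "l < a" for l
    proof -
      have "l < n" using that lens ab by simp
      have "(\<Sum>k<m. lam k * \<alpha>' l k) = (\<Sum>k<m. if k = l then lam k else 0)"
        by (rule sum.cong, use rows that in auto)
      then show ?thesis using co[OF \<open>l < n\<close>] that am by (simp add: sum_delta_lt)
    qed
    define c' where "c' k = (if k < a then c k else lam k)" for k
    have "lc m c' ?ws = w"
      unfolding lc_lc w1
    proof (rule lc_cong)
      fix l assume ln: "l < n"
      show "(\<Sum>k<m. c' k * betaf a b \<alpha>' l k) = (if l < a + b then c l else 0)"
      proof (cases "l < a")
        case True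
        have "(\<Sum>k<m. c' k * betaf a b \<alpha>' l k) = (\<Sum>k<m. if k = l then c' k else 0)"
          by (rule sum.cong, use True in \<open>auto simp: betaf_def\<close>)
        then show ?thesis using True am c'_def by (simp add: sum_delta_lt)
      next
        case False
        show ?thesis
        proof (cases "l < a + b")
          case True
          have "(\<Sum>k<m. c' k * betaf a b \<alpha>' l k) = (\<Sum>k<m. lam k * \<alpha>' l k)"
            by (rule sum.cong, use True False lz c'_def in \<open>auto simp: betaf_def\<close>)
          then show ?thesis using co[OF ln] True False by simp
        next
          case F2: False
          have "(\<Sum>k<m. c' k * betaf a b \<alpha>' l k) = 0"
            by (rule sum.neutral, use False F2 in \<open>auto simp: betaf_def\<close>)
          then show ?thesis using F2 by simp
        qed
      qed
    qed simp
    then show "w \<in> spn m ?ws" unfolding spn_def by (metis rangeI)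
  qed
qed



lemma main_lemma:
  assumes lp: "lamP n P m M" and u: "\<And>k. k < m \<Longrightarrow> inV n (u k)"
  shows "(\<forall>T\<in>ksub n m. (\<Sum>S\<in>ksub n m. M T S * dd m u ((!) (sl S))) = 0) \<or>
         (\<exists>ws \<kappa>. (\<forall>k<m. inV n (ws k)) \<and>
            (\<forall>T\<in>ksub n m. (\<Sum>S\<in>ksub n m. M T S * dd m u ((!) (sl S))) = \<kappa> * dd m ws ((!) (sl T))) \<and>
            spn m ws = Rimg P (spn m u))"
proof -
  from lp obtain fs gs hs Fs Gs Hs where H: "length fs = length Fs \<and> length gs = length Gs \<and> length hs = length Hs
    \<and> is_basis n (fs @ gs @ hs) \<and> is_basis n (Fs @ Gs @ Hs)
    \<and> P = pspan (map (\<lambda>F. (zv, F)) Fs @ zip gs Gs @ map (\<lambda>h. (h, zv)) hs)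
    \<and> (\<forall>I\<in>ksub n m. \<forall>T\<in>ksub n m.
         (\<Sum>S\<in>ksub n m. M T S * wedge (subl (fs @ gs @ hs) I) S)
         = (if {..<length fs} \<subseteq> I \<and> I \<subseteq> {..<length fs + length gs}
            then wedge (subl (Fs @ Gs @ Hs) I) T else 0))"
    unfolding lamP_def by (elim exE) (rule that, assumption)
  have lens: "length fs = length Fs" "length gs = length Gs" "length hs = length Hs" using H by blast+
  have b1: "is_basis n (fs @ gs @ hs)" using H by blast
  have b2: "is_basis n (Fs @ Gs @ Hs)" using H by blast
  have Pdef: "P = pspan (map (\<lambda>F. (zv, F)) Fs @ zip gs Gs @ map (\<lambda>h. (h, zv)) hs)" using H by blast
  have Mh: "\<forall>I\<in>ksub n m. \<forall>T\<in>ksub n m.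
         (\<Sum>S\<in>ksub n m. M T S * wedge (subl (fs @ gs @ hs) I) S)
         = (if {..<length fs} \<subseteq> I \<and> I \<subseteq> {..<length fs + length gs}
            then wedge (subl (Fs @ Gs @ Hs) I) T else 0)"
    using H by (elim conjE)
  define bs where "bs = fs @ gs @ hs"
  define Bs where "Bs = Fs @ Gs @ Hs"
  define a where "a = length fs"
  define b where "b = length gs"
  have nlen: "n = length fs + length gs + length hs" using b1 unfolding is_basis_def by simp
  have lbs: "length bs = n" and lBs: "length Bs = n" using nlen lens unfolding bs_def Bs_def by auto
  have lf: "lindep_free bs" using b1 unfolding is_basis_def bs_def by simp
  have BsV: "inV n (Bs ! l)" if "l < n" for l
  proof -
    have "Bs ! l \<in> set Bs" using that lBs by simp
    then show ?thesis using b2 unfolding is_basis_def Bs_def by blast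
  qed
  have exa: "\<exists>\<alpha>. \<forall>k<m. u k = lc n (\<lambda>l. \<alpha> l k) ((!) bs)"
    unfolding bs_def by (rule basis_coords_fam[of n "fs @ gs @ hs" m u, OF b1], erule u)
  then obtain \<alpha> where ua: "\<forall>k<m. u k = lc n (\<lambda>l. \<alpha> l k) ((!) bs)" by blast
  obtain \<alpha>' p Qm Pm where
    e1: "\<forall>k<m. \<forall>l<n. \<alpha> l k = (\<Sum>j<m. Qm k j * \<alpha>' l j)" and
    e2: "\<forall>j<m. \<forall>l<n. \<alpha>' l j = (\<Sum>k<m. Pm j k * \<alpha> l k)" and
    e3: "\<forall>k<m. p k \<le> n" and
    e4: "\<forall>k<m. \<forall>l<n. l < p k \<longrightarrow> \<alpha>' l k = 0" and
    e5: "\<forall>k<m. p k < n \<longrightarrow> \<alpha>' (p k) k = 1 \<and> (\<forall>k'<m. k' \<noteq> k \<longrightarrow> \<alpha>' (p k) k' = 0)" and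
    e6: "\<forall>k. Suc k < m \<longrightarrow> p k < p (Suc k) \<or> p (Suc k) = n"
    using echelon_obtain[of m n \<alpha>] by (elim exE conjE) (rule that; assumption)
  define us' where "us' j = lc n (\<lambda>l. \<alpha>' l j) ((!) bs)" for j
  have uQ: "u k = lc m (\<lambda>j. Qm k j) us'" if "k < m" for k
  proof -
    have "lc m (\<lambda>j. Qm k j) us' = lc n (\<lambda>l. \<Sum>j<m. Qm k j * \<alpha>' l j) ((!) bs)"
      unfolding us'_def lc_lc ..
    also have "\<dots> = lc n (\<lambda>l. \<alpha> l k) ((!) bs)" by (rule lc_cong, use e1 that in auto)
    finally show ?thesis using ua that by simp
  qed
  have uP: "us' j = lc m (\<lambda>k. Pm j k) u" if "j < m" for j
  proof -
    have "lc m (\<lambda>k. Pm j k) u = lc m (\<lambda>k. Pm j k) (\<lambda>k. lc n (\<lambda>l. \<alpha> l k) ((!) bs))"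
      by (rule lc_cong, use ua in auto)
    also have "\<dots> = lc n (\<lambda>l. \<Sum>k<m. Pm j k * \<alpha> l k) ((!) bs)" unfolding lc_lc ..
    also have "\<dots> = us' j" unfolding us'_def by (rule lc_cong, use e2 that in auto)
    finally show ?thesis by simp
  qed
  have spn_eq: "spn m u = spn m us'"
  proof
    show "spn m u \<subseteq> spn m us'"
    proof
      fix x assume "x \<in> spn m u"
      then obtain c where "x = lc m c u" unfolding spn_def by auto
      also have "\<dots> = lc m c (\<lambda>k. lc m (\<lambda>j. Qm k j) us')" by (rule lc_cong, use uQ in auto)
      also have "\<dots> = lc m (\<lambda>j. \<Sum>k<m. c k * Qm k j) us'" unfolding lc_lc ..
      finally show "x \<in> spn m us'" unfolding spn_def by auto
    qed
    show "spn m us' \<subseteq> spn m u"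
    proof
      fix x assume "x \<in> spn m us'"
      then obtain c where "x = lc m c us'" unfolding spn_def by auto
      also have "\<dots> = lc m c (\<lambda>k. lc m (\<lambda>j. Pm k j) u)" by (rule lc_cong, use uP in auto)
      also have "\<dots> = lc m (\<lambda>j. \<Sum>k<m. c k * Pm k j) u" unfolding lc_lc ..
      finally show "x \<in> spn m u" unfolding spn_def by auto
    qed
  qed
  define \<kappa> where "\<kappa> = det (mat m m (\<lambda>(j,k). Qm k j))"
  have ddu: "dd m u r = dd m us' r * \<kappa>" for r
  proof -
    have "dd m u r = dd m (\<lambda>k x. \<Sum>j<m. Qm k j * us' j x) r"
      by (rule dd_cong, use uQ in \<open>simp add: lc_def\<close>)
    also have "\<dots> = dd m us' r * \<kappa>" unfolding \<kappa>_def by (rule dd_mult)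
    finally show ?thesis .
  qed
  have Req: "(\<Sum>S\<in>ksub n m. M T S * dd m u ((!) (sl S))) = \<kappa> * (\<Sum>S\<in>ksub n m. M T S * dd m us' ((!) (sl S)))" for T
    unfolding ddu by (simp add: sum_distrib_left mult.commute mult.left_commute)
  have KF: "(\<Sum>S\<in>ksub n m. M T S * dd m us' ((!) (sl S))) =
      (\<Sum>f\<in>FF m n. (\<Prod>k<m. \<alpha>' (f k) k) *
        (if {..<a} \<subseteq> f ` {0..<m} \<and> f ` {0..<m} \<subseteq> {..<a + b} then dd m (\<lambda>k. Bs ! (f k)) ((!) (sl T)) else 0))"
    if T: "T \<in> ksub n m" for T
  proof -
    have ue: "us' = (\<lambda>k x. \<Sum>l<n. \<alpha>' l k * (bs ! l) x)" unfolding us'_def lc_def by simp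
    have Mh': "\<forall>I\<in>ksub n m. \<forall>T\<in>ksub n m.
         (\<Sum>S\<in>ksub n m. M T S * wedge (subl bs I) S)
         = (if {..<a} \<subseteq> I \<and> I \<subseteq> {..<a + b} then wedge (subl Bs I) T else 0)"
      unfolding bs_def Bs_def a_def b_def by (rule Mh)
    show ?thesis unfolding ue by (rule key_formula[OF lbs lBs Mh' T])
  qed
  show ?thesis
  proof (cases "\<forall>k<m. p k < n")
    case False
    then obtain k0 where k0: "k0 < m" "\<not> p k0 < n" by auto
    have z: "us' k0 = (\<lambda>x. 0)"
    proof -
      have "us' k0 = lc n (\<lambda>l. 0) ((!) bs)" unfolding us'_def
        by (rule lc_cong, use e4 e3 k0 in auto)
      then show ?thesis unfolding lc_def by simp
    qed
    have "dd m us' r = 0" for r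
    proof (rule dd_dep[of m "\<lambda>j. if j = k0 then 1 else 0" us' r k0])
      fix i assume "i < m"
      have "(\<Sum>k<m. (if k = k0 then 1 else 0) * us' k (r i)) = (\<Sum>k<m. if k = k0 then us' k (r i) else 0)"
        by (rule sum.cong, auto)
      also have "\<dots> = 0" using z k0 by (simp add: sum_delta_lt)
      finally show "(\<Sum>k<m. (if k = k0 then 1 else 0) * us' k (r i)) = 0" .
    qed (use k0 in auto)
    then show ?thesis using Req by simp
  next
    case True
    have mono: "p i < p j" if "i < j" "j < m" for i j
      using that
    proof (induction j)
      case (Suc j)
      have "p j < p (Suc j)" using e6 True Suc.prems by fastforce
      then show ?case using Suc by (cases "i = j", auto)
    qed simp
    have ech: "ech m n \<alpha>' p" unfolding ech_def using True e4 e5 mono by auto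
    show ?thesis
    proof (cases "a \<le> m \<and> (\<forall>k<a. p k = k)")
      case False
      have "(\<Sum>S\<in>ksub n m. M T S * dd m us' ((!) (sl S))) = 0" if T: "T \<in> ksub n m" for T
        unfolding KF[OF T]
      proof (rule sum.neutral, rule ballI)
        fix f assume f: "f \<in> FF m n"
        show "(\<Prod>k<m. \<alpha>' (f k) k) *
          (if {..<a} \<subseteq> f ` {0..<m} \<and> f ` {0..<m} \<subseteq> {..<a + b} then dd m (\<lambda>k. Bs ! (f k)) ((!) (sl T)) else 0) = 0"
        proof (cases "inj_on f {0..<m}")
          case True
          show ?thesis
          proof (cases "{..<a} \<subseteq> f ` {0..<m} \<and> f ` {0..<m} \<subseteq> {..<a + b}")
            case c: True
            have "(\<Prod>k<m. \<alpha>' (f k) k) = 0"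
            proof (rule ccontr)
              assume nz: "(\<Prod>k<m. \<alpha>' (f k) k) \<noteq> 0"
              have "a \<le> m \<and> (\<forall>k<a. f k = k) \<and> (\<forall>k<a. p k = k)"
                by (rule ech_2a[OF ech f True _ nz], use c in blast)
              with False show False by blast
            qed
            then show ?thesis by (simp only: mult_zero_left)
          next
            case c: False
            then show ?thesis by (simp only: if_False mult_zero_right)
          qed
        qed (simp add: FF_noninj)
      qed
      then show ?thesis using Req by simp
    next
      case True
      then have am: "a \<le> m" and pa: "\<forall>k<a. p k = k" by auto
      define ws where "ws k = lc n (\<lambda>l. betaf a b \<alpha>' l k) ((!) Bs)" for k
      have wsV: "\<forall>k<m. inV n (ws k)" unfolding ws_def by (auto intro!: lc_inV BsV)
      have R2: "(\<Sum>S\<in>ksub n m. M T S * dd m us' ((!) (sl S))) = dd m ws ((!) (sl T))" if T: "T \<in> ksub n m" for T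
      proof -
        have "(\<Sum>S\<in>ksub n m. M T S * dd m us' ((!) (sl S))) =
          (\<Sum>f\<in>FF m n. (\<Prod>k<m. betaf a b \<alpha>' (f k) k) * dd m (\<lambda>k. Bs ! (f k)) ((!) (sl T)))"
          unfolding KF[OF T]
        proof (rule sum.cong[OF refl])
          fix f assume f: "f \<in> FF m n"
          show "(\<Prod>k<m. \<alpha>' (f k) k) *
            (if {..<a} \<subseteq> f ` {0..<m} \<and> f ` {0..<m} \<subseteq> {..<a + b} then dd m (\<lambda>k. Bs ! (f k)) ((!) (sl T)) else 0) =
            (\<Prod>k<m. betaf a b \<alpha>' (f k) k) * dd m (\<lambda>k. Bs ! (f k)) ((!) (sl T))"
          proof (cases "inj_on f {0..<m}")
            case True
            have "(\<Prod>k<m. \<alpha>' (f k) k) *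
              (if {..<a} \<subseteq> f ` {0..<m} \<and> f ` {0..<m} \<subseteq> {..<a + b} then dd m (\<lambda>k. Bs ! (f k)) ((!) (sl T)) else 0)
              = ((\<Prod>k<m. \<alpha>' (f k) k) * (if {..<a} \<subseteq> f ` {0..<m} \<and> f ` {0..<m} \<subseteq> {..<a + b} then 1 else 0)) * dd m (\<lambda>k. Bs ! (f k)) ((!) (sl T))"
              by simp
            then show ?thesis unfolding ech_2b[OF ech am pa f True] .
          qed (simp add: FF_noninj)
        qed
        also have "\<dots> = dd m ws ((!) (sl T))" unfolding ws_def dd_lc ..
        finally show ?thesis .
      qed
      have rows: "\<And>l k. l < a \<Longrightarrow> k < m \<Longrightarrow> \<alpha>' l k = (if l = k then 1 else 0)"
        using ech_rows[OF ech am pa] by blast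
      have sp: "spn m ws = Rimg P (spn m u)"
        unfolding spn_eq Pdef ws_def us'_def Bs_def bs_def
        by (rule span_part[OF lens nlen a_def b_def _ am rows], use lf bs_def in simp)
      show ?thesis
      proof (rule disjI2, rule exI[of _ ws], rule exI[of _ \<kappa>], intro conjI ballI)
        fix T assume T: "T \<in> ksub n m"
        show "(\<Sum>S\<in>ksub n m. M T S * dd m u ((!) (sl S))) = \<kappa> * dd m ws ((!) (sl T))"
          by (simp only: Req R2[OF T])
      qed (use wsV sp in auto)
    qed
  qed
qed



definition indep :: "nat \<Rightarrow> (nat \<Rightarrow> cvec) \<Rightarrow> bool" where
  "indep m v \<longleftrightarrow> (\<forall>c. lc m c v = (\<lambda>x. 0) \<longrightarrow> (\<forall>k<m. c k = 0))"

lemma spn_zero: "(\<lambda>x. 0) \<in> spn m u"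
  unfolding spn_def lc_def by (rule range_eqI[of _ _ "\<lambda>_. 0"], simp)

lemma lc_delta: "k < m \<Longrightarrow> lc m (\<lambda>j. if j = k then 1 else 0) u = u k"
proof (rule ext)
  fix x assume k: "k < m"
  have "(\<Sum>l<m. (if l = k then 1 else 0) * u l x) = (\<Sum>l<m. if l = k then u l x else 0)"
    by (rule sum.cong, auto)
  then show "lc m (\<lambda>j. if j = k then 1 else 0) u x = u k x" using k unfolding lc_def by simp
qed

lemma spn_mem: "k < m \<Longrightarrow> u k \<in> spn m u"
  unfolding spn_def using lc_delta by (metis rangeI)

lemma spn_sub:
  assumes "\<And>k. k < K \<Longrightarrow> x k \<in> spn L y"
  shows "spn K x \<subseteq> spn L y"
proof
  have "\<forall>k. \<exists>c. k < K \<longrightarrow> x k = lc L c y" using assms unfolding spn_def by blast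
  then obtain Z where Z: "\<And>k. k < K \<Longrightarrow> x k = lc L (Z k) y" by metis
  fix z assume "z \<in> spn K x"
  then obtain c where "z = lc K c x" unfolding spn_def by auto
  also have "\<dots> = lc K c (\<lambda>k. lc L (Z k) y)" by (rule lc_cong, use Z in auto)
  also have "\<dots> = lc L (\<lambda>j. \<Sum>k<K. c k * Z k j) y" by (rule lc_lc)
  finally show "z \<in> spn L y" unfolding spn_def by auto
qed

lemma spn_mono: "d \<le> d' \<Longrightarrow> spn d u \<subseteq> spn d' u"
  by (rule spn_sub, rule spn_mem, simp)

lemma spn_cong: "(\<And>k. k < m \<Longrightarrow> u k = v k) \<Longrightarrow> spn m u = spn m v"
  unfolding spn_def using lc_cong by (metis (no_types, lifting) image_cong)

lemma steinitz:
  assumes x: "\<And>k. k < K \<Longrightarrow> x k \<in> spn L y" and LK: "L < K"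
  shows "\<not> indep K x"
proof -
  have "\<forall>k. \<exists>c. k < K \<longrightarrow> x k = lc L c y" using x unfolding spn_def by blast
  then obtain Z where Z: "\<And>k. k < K \<Longrightarrow> x k = lc L (Z k) y" by metis
  define Zm where "Zm = mat K K (\<lambda>(j,k). if j < L then Z k j else (0::complex))"
  have Zc: "Zm \<in> carrier_mat K K" unfolding Zm_def by simp
  have "transpose_mat Zm *\<^sub>v unit_vec K L = 0\<^sub>v K"
    by (rule eq_vecI, use LK in \<open>auto simp: Zm_def\<close>)
  moreover have "unit_vec K L \<noteq> (0\<^sub>v K :: complex vec)"
    using LK by (metis index_unit_vec(1) index_zero_vec(1) zero_neq_one)
  ultimately have "det (transpose_mat Zm) = 0"
    by (subst det_0_iff_vec_prod_zero[of _ K], use Zc in \<open>auto intro!: exI[of _ "unit_vec K L"]\<close>)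
  then have "det Zm = 0" using det_transpose[OF Zc] by simp
  then obtain v where v: "v \<in> carrier_vec K" "v \<noteq> 0\<^sub>v K" "Zm *\<^sub>v v = 0\<^sub>v K"
    using det_0_iff_vec_prod_zero[OF Zc] by blast
  define c where "c k = v $ k" for k
  have "lc K c x = lc K c (\<lambda>k. lc L (Z k) y)" by (rule lc_cong, use Z in auto)
  also have "\<dots> = lc L (\<lambda>j. \<Sum>k<K. c k * Z k j) y" by (rule lc_lc)
  also have "\<dots> = lc L (\<lambda>j. 0) y"
  proof (rule lc_cong)
    fix j assume j: "j < L"
    have "(Zm *\<^sub>v v) $ j = 0" using v(3) j LK by simp
    then show "(\<Sum>k<K. c k * Z k j) = 0" using j LK v(1)
      by (simp add: Zm_def scalar_prod_def c_def lessThan_atLeast0 mult.commute)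
  qed simp
  also have "\<dots> = (\<lambda>x. 0)" unfolding lc_def by simp
  finally have z: "lc K c x = (\<lambda>x. 0)" .
  have "\<exists>k<K. c k \<noteq> 0"
  proof (rule ccontr)
    assume "\<not> (\<exists>k<K. c k \<noteq> 0)"
    then have "v = 0\<^sub>v K" using v(1) unfolding c_def by (intro eq_vecI, auto)
    with v(2) show False by simp
  qed
  with z show ?thesis unfolding indep_def by blast
qed

lemma indep_ext:
  assumes ind: "indep k w" and v: "v \<notin> spn k w"
  shows "indep (Suc k) (w(k := v))"
  unfolding indep_def
proof (intro allI impI)
  fix c j assume z: "lc (Suc k) c (w(k := v)) = (\<lambda>x. 0)" and j: "j < Suc k"
  have lw: "lc k c (w(k := v)) = lc k c w" by (rule lc_cong, auto)
  have e: "lc (Suc k) c (w(k := v)) = (\<lambda>x. lc k c w x + c k * v x)"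
    unfolding lc_def[of "Suc k"] using lw unfolding lc_def by (simp add: fun_eq_iff)
  have ck: "c k = 0"
  proof (rule ccontr)
    assume ck: "c k \<noteq> 0"
    have "v = lc k (\<lambda>j. - c j / c k) w"
    proof (rule ext)
      fix x
      have "lc k c w x + c k * v x = 0" using z e by (metis)
      then have "v x = - (lc k c w x) / c k" using ck by (simp add: field_simps add_eq_0_iff)
      also have "\<dots> = lc k (\<lambda>j. - c j / c k) w x"
        unfolding lc_def by (simp add: sum_divide_distrib sum_negf)
      finally show "v x = lc k (\<lambda>j. - c j / c k) w x" .
    qed
    then have "v \<in> spn k w" unfolding spn_def by (metis rangeI)
    with v show False by simp
  qed
  have "lc k c w = (\<lambda>x. 0)" using z e ck by (simp add: fun_eq_iff)
  then have "\<forall>j<k. c j = 0" using ind unfolding indep_def by blast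
  with ck j show "c j = 0" using less_Suc_eq by auto
qed

lemma fill:
  assumes ind: "indep K x" and sub: "\<And>k. k < K \<Longrightarrow> x k \<in> spn K y"
  shows "spn K x = spn K y"
proof
  show "spn K x \<subseteq> spn K y" by (rule spn_sub[OF sub])
  have "y j \<in> spn K x" if j: "j < K" for j
  proof (rule ccontr)
    assume nj: "y j \<notin> spn K x"
    have "indep (Suc K) (x(K := y j))" by (rule indep_ext[OF ind nj])
    moreover have "\<not> indep (Suc K) (x(K := y j))"
      by (rule steinitz[of "Suc K" _ K y], use sub spn_mem j in \<open>auto simp: less_Suc_eq\<close>)
    ultimately show False by simp
  qed
  then show "spn K y \<subseteq> spn K x" by (rule spn_sub)
qed

lemma dd_indep: "dd m v r \<noteq> 0 \<Longrightarrow> indep m v"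
  unfolding indep_def
proof (intro allI impI, rule ccontr)
  fix c k0 assume d: "dd m v r \<noteq> 0" and z: "lc m c v = (\<lambda>x. 0)" and "k0 < m" "c k0 \<noteq> 0"
  moreover have "\<And>i. i < m \<Longrightarrow> (\<Sum>k<m. c k * v k (r i)) = 0"
    using z unfolding lc_def by (metis)
  ultimately have "dd m v r = 0" by (intro dd_dep[of m c v r k0]) auto
  with d show False by simp
qed



definition flinv :: "nat \<Rightarrow> nat set \<Rightarrow> (nat \<Rightarrow> nat \<Rightarrow> cvec) \<Rightarrow> nat \<Rightarrow> (nat \<Rightarrow> cvec) \<Rightarrow> bool" where
  "flinv n D W k w \<longleftrightarrow> (\<forall>i<k. inV n (w i)) \<and> indep k w \<and> (\<forall>d\<in>D. d \<le> k \<longrightarrow> spn d w = spn d (W d))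
     \<and> (\<forall>d\<in>D. k \<le> d \<longrightarrow> spn k w \<subseteq> spn d (W d))"

lemma flag_step:
  assumes inv: "flinv n D W k w"
    and kK: "Suc k \<le> K" and ie: "indep K e" and eV: "\<And>i. i < K \<Longrightarrow> inV n (e i)"
    and sk: "spn k w \<subseteq> spn K e" and sd: "\<And>d. d \<in> D \<Longrightarrow> Suc k \<le> d \<Longrightarrow> spn K e \<subseteq> spn d (W d)"
  shows "\<exists>w'. flinv n D W (Suc k) w'"
proof -
  from inv have wV: "\<forall>i<k. inV n (w i)" and iw: "indep k w"
    and eq: "\<forall>d\<in>D. d \<le> k \<longrightarrow> spn d w = spn d (W d)" unfolding flinv_def by auto
  have "\<not> spn K e \<subseteq> spn k w"
  proof
    assume "spn K e \<subseteq> spn k w"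
    then have "\<And>i. i < K \<Longrightarrow> e i \<in> spn k w" using spn_mem by blast
    then have "\<not> indep K e" by (rule steinitz, use kK in simp, use kK in simp)
    with ie show False by simp
  qed
  then obtain v where vT: "v \<in> spn K e" and vn: "v \<notin> spn k w" by auto
  define w' where "w' = w(k := v)"
  have vV: "inV n v" using vT unfolding spn_def by (auto intro: lc_inV eV)
  have w'V: "\<forall>i<Suc k. inV n (w' i)" using wV vV unfolding w'_def by (auto simp: less_Suc_eq)
  have iw': "indep (Suc k) w'" unfolding w'_def by (rule indep_ext[OF iw vn])
  have sub: "spn (Suc k) w' \<subseteq> spn K e"
  proof (rule spn_sub)
    fix i assume "i < Suc k"
    then show "w' i \<in> spn K e"
    proof (cases "i = k")
      case False
      with \<open>i < Suc k\<close> have "i < k" by simp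
      then have "w i \<in> spn k w" by (rule spn_mem)
      then show ?thesis using sk False unfolding w'_def by auto
    qed (use vT w'_def in simp)
  qed
  have c3: "\<forall>d\<in>D. d \<le> Suc k \<longrightarrow> spn d w' = spn d (W d)"
  proof (intro ballI impI)
    fix d assume d: "d \<in> D" "d \<le> Suc k"
    show "spn d w' = spn d (W d)"
    proof (cases "d \<le> k")
      case True
      have "spn d w' = spn d w" by (rule spn_cong, use True in \<open>auto simp: w'_def\<close>)
      then show ?thesis using eq d True by simp
    next
      case False
      then have dk: "d = Suc k" using d by simp
      show ?thesis unfolding dk
      proof (rule fill[OF iw'])
        fix i assume "i < Suc k"
        then have "w' i \<in> spn (Suc k) w'" by (rule spn_mem)
        then show "w' i \<in> spn (Suc k) (W (Suc k))" using sub sd[OF d(1)] dk by auto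
      qed
    qed
  qed
  have c4: "\<forall>d\<in>D. Suc k \<le> d \<longrightarrow> spn (Suc k) w' \<subseteq> spn d (W d)"
    using sub sd by blast
  show ?thesis unfolding flinv_def by (rule exI[of _ w'], use w'V iw' c3 c4 in blast)
qed

definition ebas :: "nat \<Rightarrow> cvec" where "ebas i = (\<lambda>x. if x = i then 1 else 0)"

lemma lc_ebas: "lc n c ebas x = (if x < n then c x else 0)"
proof -
  have "(\<Sum>l<n. c l * ebas l x) = (\<Sum>l<n. if l = x then c l else 0)"
    by (rule sum.cong, auto simp: ebas_def)
  then show ?thesis unfolding lc_def by simp
qed

lemma indep_ebas: "indep n ebas"
  unfolding indep_def
proof (intro allI impI)
  fix c k assume z: "lc n c ebas = (\<lambda>x. 0)" and k: "k < n"
  have "lc n c ebas k = 0" using z by simp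
  then show "c k = 0" using k by (simp add: lc_ebas)
qed

lemma inV_spn_ebas: "inV n v \<Longrightarrow> v \<in> spn n ebas"
proof -
  assume v: "inV n v"
  have "lc n v ebas = v" using v by (auto simp: lc_ebas inV_def fun_eq_iff)
  then show ?thesis unfolding spn_def by (metis rangeI)
qed

lemma flag_exists:
  assumes fin: "finite D" and Dn: "\<forall>d\<in>D. d \<le> n"
    and WV: "\<forall>d\<in>D. (\<forall>k<d. inV n (W d k)) \<and> indep d (W d)"
    and nest: "\<forall>d\<in>D. \<forall>d'\<in>D. d < d' \<longrightarrow> spn d (W d) \<subseteq> spn d' (W d')"
  shows "\<exists>w. flinv n D W n w"
proof -
  have "k \<le> n \<Longrightarrow> \<exists>w. flinv n D W k w" for k
  proof (induction k)
    case 0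
    have s0: "spn 0 u = {\<lambda>x. 0}" for u unfolding spn_def lc_def by auto
    have "flinv n D W 0 (\<lambda>_. zv)" unfolding flinv_def indep_def
      using spn_zero by (auto simp: s0)
    then show ?case by blast
  next
    case (Suc k)
    then obtain w where inv: "flinv n D W k w" by auto
    define Dk where "Dk = {d\<in>D. Suc k \<le> d}"
    show ?case
    proof (cases "Dk = {}")
      case False
      define ds where "ds = Min Dk"
      have finDk: "finite Dk" using fin unfolding Dk_def by simp
      have dsD: "ds \<in> Dk" unfolding ds_def using Min_in[OF finDk False] .
      have dsmin: "\<And>d. d \<in> Dk \<Longrightarrow> ds \<le> d" unfolding ds_def using Min_le[OF finDk] by blast
      show ?thesis
      proof (rule flag_step[OF inv, of ds "W ds"])
        show "Suc k \<le> ds" using dsD unfolding Dk_def by simp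
        show "indep ds (W ds)" using WV dsD unfolding Dk_def by simp
        show "\<And>i. i < ds \<Longrightarrow> inV n (W ds i)" using WV dsD unfolding Dk_def by simp
        show "spn k w \<subseteq> spn ds (W ds)" using inv dsD unfolding flinv_def Dk_def by auto
        fix d assume d: "d \<in> D" "Suc k \<le> d"
        then have "ds \<le> d" using dsmin unfolding Dk_def by simp
        then show "spn ds (W ds) \<subseteq> spn d (W d)"
          using nest dsD d unfolding Dk_def by (cases "ds = d", auto)
      qed
    next
      case True
      show ?thesis
      proof (rule flag_step[OF inv, of n ebas])
        show "Suc k \<le> n" using Suc by simp
        show "indep n ebas" by (rule indep_ebas)
        show "\<And>i. i < n \<Longrightarrow> inV n (ebas i)" by (auto simp: inV_def ebas_def)
        show "spn k w \<subseteq> spn n ebas"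
          by (rule spn_sub, rule inV_spn_ebas, use inv in \<open>auto simp: flinv_def\<close>)
        fix d assume "d \<in> D" "Suc k \<le> d"
        then show "spn n ebas \<subseteq> spn d (W d)" using True unfolding Dk_def by auto
      qed
    qed
  qed
  then show ?thesis by simp
qed



lemma cspan_zero: "(\<lambda>i. 0) \<in> cspan X"
  unfolding cspan_def by (rule CollectI, rule exI[of _ "{}"], auto)

lemma cspan_gen: "v \<in> X \<Longrightarrow> (\<lambda>i. s * v i) \<in> cspan X"
  unfolding cspan_def by (rule CollectI, rule exI[of _ "{v}"], rule exI[of _ "\<lambda>_. s"], auto)

lemma cspan_smult: "x \<in> cspan X \<Longrightarrow> (\<lambda>i. s * x i) \<in> cspan X"
proof -
  assume "x \<in> cspan X"
  then obtain F c where F: "finite F" "F \<subseteq> X" "x = (\<lambda>i. \<Sum>v\<in>F. c v * v i)" unfolding cspan_def by auto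
  show ?thesis unfolding cspan_def
    by (rule CollectI, rule exI[of _ F], rule exI[of _ "\<lambda>v. s * c v"], use F in \<open>auto simp: sum_distrib_left mult.assoc\<close>)
qed

lemma cspan_add: "x \<in> cspan X \<Longrightarrow> y \<in> cspan X \<Longrightarrow> (\<lambda>i. x i + y i) \<in> cspan X"
proof -
  assume "x \<in> cspan X" "y \<in> cspan X"
  then obtain F c G d where F: "finite F" "F \<subseteq> X" "x = (\<lambda>i. \<Sum>v\<in>F. c v * v i)"
    and G: "finite G" "G \<subseteq> X" "y = (\<lambda>i. \<Sum>v\<in>G. d v * v i)" unfolding cspan_def by auto
  define e where "e v = (if v \<in> F then c v else 0) + (if v \<in> G then d v else 0)" for v
  have "(\<lambda>i. x i + y i) = (\<lambda>i. \<Sum>v\<in>F \<union> G. e v * v i)"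
  proof (rule ext)
    fix i
    have 1: "(\<Sum>v\<in>F \<union> G. (if v \<in> F then c v else 0) * v i) = (\<Sum>v\<in>F. c v * v i)"
      by (rule sum.mono_neutral_cong_right, use F G in auto)
    have 2: "(\<Sum>v\<in>F \<union> G. (if v \<in> G then d v else 0) * v i) = (\<Sum>v\<in>G. d v * v i)"
      by (rule sum.mono_neutral_cong_right, use F G in auto)
    show "x i + y i = (\<Sum>v\<in>F \<union> G. e v * v i)"
      unfolding e_def distrib_right sum.distrib 1 2 F(3) G(3) ..
  qed
  then show ?thesis unfolding cspan_def using F G by blast
qed

lemma cspan_sum:
  assumes "finite F" "\<And>v. v \<in> F \<Longrightarrow> h v \<in> cspan Y"
  shows "(\<lambda>i. \<Sum>v\<in>F. c v * h v i) \<in> cspan Y"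
  using assms
proof (induction F rule: finite_induct)
  case empty
  then show ?case using cspan_zero by simp
next
  case (insert v F)
  have "(\<lambda>i. \<Sum>v\<in>insert v F. c v * h v i) = (\<lambda>i. c v * h v i + (\<Sum>v\<in>F. c v * h v i))"
    using insert by simp
  also have "\<dots> \<in> cspan Y"
    by (rule cspan_add, rule cspan_smult, use insert in auto)
  finally show ?case .
qed

lemma tb_Nil: "tb n [] = {[]}" unfolding tb_def by auto

lemma tb_Cons: "tb n (d # ds) = (\<lambda>(S, Ss). S # Ss) ` (ksub n d \<times> tb n ds)"
proof
  show "tb n (d # ds) \<subseteq> (\<lambda>(S, Ss). S # Ss) ` (ksub n d \<times> tb n ds)"
  proof
    fix Ss assume "Ss \<in> tb n (d # ds)"
    then show "Ss \<in> (\<lambda>(S, Ss). S # Ss) ` (ksub n d \<times> tb n ds)"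
      unfolding tb_def by (cases Ss, auto intro!: image_eqI[of _ _ "(hd Ss, tl Ss)"])
  qed
  show "(\<lambda>(S, Ss). S # Ss) ` (ksub n d \<times> tb n ds) \<subseteq> tb n (d # ds)"
    unfolding tb_def by (auto simp: nth_Cons split: nat.splits)
qed

lemma tb_finite: "finite (tb n ds)"
  by (induction ds, auto simp: tb_Nil tb_Cons ksub_finite)

lemma tb_prod_sum:
  fixes H :: "nat \<Rightarrow> nat set \<Rightarrow> complex"
  shows "(\<Sum>Ss\<in>tb n ds. \<Prod>k<length ds. H k (Ss ! k)) = (\<Prod>k<length ds. \<Sum>S\<in>ksub n (ds ! k). H k S)"
proof (induction ds arbitrary: H)
  case Nil
  then show ?case by (simp add: tb_Nil)
next
  case (Cons d ds)
  have inj: "inj_on (\<lambda>(S, Ss). S # Ss) (ksub n d \<times> tb n ds)" by (auto simp: inj_on_def)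
  have "(\<Sum>Ss\<in>tb n (d # ds). \<Prod>k<length (d # ds). H k (Ss ! k))
      = (\<Sum>p\<in>ksub n d \<times> tb n ds. \<Prod>k<Suc (length ds). H k ((fst p # snd p) ! k))"
    unfolding tb_Cons by (subst sum.reindex[OF inj], auto intro!: sum.cong simp: case_prod_beta)
  also have "\<dots> = (\<Sum>p\<in>ksub n d \<times> tb n ds. H 0 (fst p) * (\<Prod>k<length ds. H (Suc k) (snd p ! k)))"
    by (rule sum.cong[OF refl], subst prod.lessThan_Suc_shift, simp)
  also have "\<dots> = (\<Sum>S\<in>ksub n d. \<Sum>Ss\<in>tb n ds. H 0 S * (\<Prod>k<length ds. H (Suc k) (Ss ! k)))"
    unfolding sum.cartesian_product by (simp add: case_prod_beta)
  also have "\<dots> = (\<Sum>S\<in>ksub n d. H 0 S) * (\<Sum>Ss\<in>tb n ds. \<Prod>k<length ds. H (Suc k) (Ss ! k))"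
    by (simp add: sum_product)
  also have "\<dots> = (\<Sum>S\<in>ksub n d. H 0 S) * (\<Prod>k<length ds. \<Sum>S\<in>ksub n (ds ! k). H (Suc k) S)"
    using Cons.IH[of "\<lambda>k. H (Suc k)"] by simp
  also have "\<dots> = (\<Prod>k<length (d # ds). \<Sum>S\<in>ksub n ((d # ds) ! k). H k S)"
    by (simp only: length_Cons prod.lessThan_Suc_shift nth_Cons_0 nth_Cons_Suc)
  finally show ?case .
qed

lemma rnu_lin:
  assumes "finite F"
  shows "rnu n ds A (\<lambda>i. \<Sum>v\<in>F. c v * v i) = (\<lambda>Ts. \<Sum>v\<in>F. c v * rnu n ds A v Ts)"
  unfolding rnu_def
  by (rule ext, auto simp: sum_distrib_left mult.left_commute intro: sum.swap)

lemma rnu_Xi: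
  assumes "\<forall>d\<in>set ds. d \<le> n"
  shows "rnu n ds B (Xi ds) = (\<lambda>Ts. if Ts \<in> tb n ds then (\<Prod>k<length ds. B (ds ! k) (Ts ! k) {..<ds ! k}) else 0)"
proof (rule ext)
  fix Ts
  let ?S0 = "map (\<lambda>d. {..<d}) ds"
  have S0: "?S0 \<in> tb n ds" using assms unfolding tb_def ksub_def by auto
  have "(\<Sum>Ss\<in>tb n ds. (\<Prod>k<length ds. B (ds ! k) (Ts ! k) (Ss ! k)) * Xi ds Ss)
      = (\<Sum>Ss\<in>tb n ds. if Ss = ?S0 then (\<Prod>k<length ds. B (ds ! k) (Ts ! k) (Ss ! k)) else 0)"
    by (rule sum.cong, auto simp: Xi_def)
  also have "\<dots> = (\<Prod>k<length ds. B (ds ! k) (Ts ! k) (?S0 ! k))"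
    using S0 tb_finite by (simp add: sum.delta')
  also have "\<dots> = (\<Prod>k<length ds. B (ds ! k) (Ts ! k) {..<ds ! k})" by (rule prod.cong, auto)
  finally show "rnu n ds B (Xi ds) Ts = (if Ts \<in> tb n ds then (\<Prod>k<length ds. B (ds ! k) (Ts ! k) {..<ds ! k}) else 0)"
    unfolding rnu_def by simp
qed

lemma rnu_prod:
  "rnu n ds A (\<lambda>Ts. if Ts \<in> tb n ds then (\<Prod>k<length ds. G k (Ts ! k)) else 0)
   = (\<lambda>Ts. if Ts \<in> tb n ds then (\<Prod>k<length ds. \<Sum>S\<in>ksub n (ds ! k). A (ds ! k) (Ts ! k) S * G k S) else 0)"
proof (rule ext)
  fix Ts
  have "(\<Sum>Ss\<in>tb n ds. (\<Prod>k<length ds. A (ds ! k) (Ts ! k) (Ss ! k)) * (if Ss \<in> tb n ds then (\<Prod>k<length ds. G k (Ss ! k)) else 0))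
     = (\<Sum>Ss\<in>tb n ds. \<Prod>k<length ds. A (ds ! k) (Ts ! k) (Ss ! k) * G k (Ss ! k))"
    by (rule sum.cong, auto simp: prod.distrib)
  also have "\<dots> = (\<Prod>k<length ds. \<Sum>S\<in>ksub n (ds ! k). A (ds ! k) (Ts ! k) S * G k S)"
    by (rule tb_prod_sum)
  finally show "rnu n ds A (\<lambda>Ts. if Ts \<in> tb n ds then (\<Prod>k<length ds. G k (Ts ! k)) else 0) Ts =
    (if Ts \<in> tb n ds then (\<Prod>k<length ds. \<Sum>S\<in>ksub n (ds ! k). A (ds ! k) (Ts ! k) S * G k S) else 0)"
    unfolding rnu_def by simp
qed

lemma degs_range: "d \<in> set (degs n nu) \<Longrightarrow> 1 \<le> d \<and> d \<le> n"
  unfolding degs_def by (auto split: if_splits)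

lemma Indef_Im: "Indef P \<subseteq> Im P"
  unfolding Indef_def Im_def by force

lemma Rimg_mono: "U \<subseteq> U' \<Longrightarrow> Rimg P U \<subseteq> Rimg P U'"
  unfolding Rimg_def by auto

lemma Rimg_Im: "Rimg P U \<subseteq> Im P"
  unfolding Rimg_def Im_def by force

lemma Rimg_Indef: "zv \<in> U \<Longrightarrow> Indef P \<subseteq> Rimg P U"
  unfolding Rimg_def Indef_def by auto

lemma zv_spn: "zv \<in> spn m u"
  using spn_zero unfolding zv_def .

lemma hinge_chain:
  assumes h: "hinge n Ps" and ij: "i < j" "j < length Ps"
  shows "Im (Ps ! i) \<subseteq> Indef (Ps ! j)"
  using ij
proof (induction j)
  case 0
  then show ?case by simp
next
  case (Suc j)
  have e: "Im (Ps ! j) = Indef (Ps ! Suc j)" using h Suc.prems unfolding hinge_def by blast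
  show ?case
  proof (cases "i = j")
    case True
    then show ?thesis using e by simp
  next
    case False
    then have "Im (Ps ! i) \<subseteq> Indef (Ps ! j)" using Suc by simp
    also have "\<dots> \<subseteq> Im (Ps ! j)" by (rule Indef_Im)
    finally show ?thesis using e by simp
  qed
qed

lemma dd_cong_rows: "(\<And>i k. i < m \<Longrightarrow> k < m \<Longrightarrow> u k (r i) = v k (r i)) \<Longrightarrow> dd m u r = dd m v r"
  unfolding dd_def by (intro arg_cong[where f=det] eq_matI, auto)

lemma sl_ksub: "S \<in> ksub n m \<Longrightarrow> i < m \<Longrightarrow> sl S ! i < n"
proof -
  assume S: "S \<in> ksub n m" and i: "i < m"
  have fin: "finite S" using S by (rule ksub_elem_finite)
  have "sl S ! i \<in> set (sl S)" by (rule nth_mem, use i S fin in \<open>simp add: ksub_def\<close>)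
  then show ?thesis using S fin unfolding ksub_def by auto
qed



lemma det_basis_nonzero:
  assumes wV: "\<forall>i<n. inV n (w i)" and iw: "indep n w"
  shows "det (mat n n (\<lambda>(i,k). w k i)) \<noteq> 0"
proof
  let ?M = "mat n n (\<lambda>(i,k). w k i)"
  assume "det ?M = 0"
  then obtain v where v: "v \<in> carrier_vec n" "v \<noteq> 0\<^sub>v n" "?M *\<^sub>v v = 0\<^sub>v n"
    using det_0_iff_vec_prod_zero[of ?M n] by auto
  have "lc n (\<lambda>k. v $ k) w = (\<lambda>x. 0)"
  proof (rule ext)
    fix x
    show "lc n (\<lambda>k. v $ k) w x = 0"
    proof (cases "x < n")
      case True
      have "(?M *\<^sub>v v) $ x = 0" using v(3) True by simp
      then show ?thesis using True v(1) unfolding lc_def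
        by (simp add: scalar_prod_def lessThan_atLeast0 mult.commute)
    next
      case False
      then show ?thesis using wV unfolding lc_def inV_def by simp
    qed
  qed
  then have "\<forall>k<n. v $ k = 0" using iw unfolding indep_def by blast
  then have "v = 0\<^sub>v n" using v(1) by (intro eq_vecI, auto)
  with v(2) show False by simp
qed

lemma core:
  assumes ht: "hinge_tuple n A" and g: "g \<in> GLn n"
  shows "rnu n (degs n nu) A (rnu n (degs n nu) (lam_cha g) (Xi (degs n nu))) \<in> Hnu n nu"
proof -
  define ds where "ds = degs n nu"
  define D where "D = set ds"
  have Dn: "\<And>d. d \<in> D \<Longrightarrow> 1 \<le> d \<and> d \<le> n" unfolding D_def ds_def by (rule degs_range)
  have Dn': "\<forall>d\<in>set ds. d \<le> n" using Dn D_def by blast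
  define X where "X = {rnu n ds (lam_cha g) (Xi ds) | g. g \<in> GLn n}"
  have HX: "Hnu n nu = cspan X" unfolding Hnu_def X_def ds_def ..
  define u where "u k x = (if x < n then g x k else 0)" for k x
  have uV: "\<And>k. k < m \<Longrightarrow> inV n (u k)" for m unfolding u_def inV_def by simp
  define Fac where "Fac d T = (\<Sum>S\<in>ksub n d. A d T S * lam_cha g d S {..<d})" for d T
  have tens: "rnu n ds A (rnu n ds (lam_cha g) (Xi ds)) =
     (\<lambda>Ts. if Ts \<in> tb n ds then (\<Prod>k<length ds. Fac (ds ! k) (Ts ! k)) else 0)"
  proof -
    have "rnu n ds A (\<lambda>Ts. if Ts \<in> tb n ds then (\<Prod>k<length ds. (\<lambda>k S. lam_cha g (ds ! k) S {..<ds ! k}) k (Ts ! k)) else 0)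
     = (\<lambda>Ts. if Ts \<in> tb n ds then (\<Prod>k<length ds. \<Sum>S\<in>ksub n (ds ! k). A (ds ! k) (Ts ! k) S * (\<lambda>k S. lam_cha g (ds ! k) S {..<ds ! k}) k S) else 0)"
      by (rule rnu_prod)
    then show ?thesis unfolding rnu_Xi[OF Dn'] Fac_def by simp
  qed
  from ht obtain Ps where hg: "hinge n Ps" and H: "\<forall>m\<le>n. \<exists>j<length Ps. \<exists>M. lamP n (Ps ! j) m M
        \<and> (\<exists>T\<in>ksub n m. \<exists>S\<in>ksub n m. M T S \<noteq> 0)
        \<and> (\<exists>c. \<forall>T\<in>ksub n m. \<forall>S\<in>ksub n m. A m T S = c * M T S)"
    unfolding hinge_tuple_def by blast
  have "\<forall>m. \<exists>j. m \<le> n \<longrightarrow> j < length Ps \<and> (\<exists>M. lamP n (Ps ! j) m M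
        \<and> (\<exists>c. \<forall>T\<in>ksub n m. \<forall>S\<in>ksub n m. A m T S = c * M T S))" using H by blast
  then obtain J where J: "\<forall>m. m \<le> n \<longrightarrow> J m < length Ps \<and> (\<exists>M. lamP n (Ps ! J m) m M
        \<and> (\<exists>c. \<forall>T\<in>ksub n m. \<forall>S\<in>ksub n m. A m T S = c * M T S))" by (metis choice)
  then have "\<forall>m. \<exists>M. m \<le> n \<longrightarrow> lamP n (Ps ! J m) m M
        \<and> (\<exists>c. \<forall>T\<in>ksub n m. \<forall>S\<in>ksub n m. A m T S = c * M T S)" by blast
  then obtain MM where MM: "\<forall>m. m \<le> n \<longrightarrow> lamP n (Ps ! J m) m (MM m)
        \<and> (\<exists>c. \<forall>T\<in>ksub n m. \<forall>S\<in>ksub n m. A m T S = c * MM m T S)" by (metis choice)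
  then have "\<forall>m. \<exists>c. m \<le> n \<longrightarrow> (\<forall>T\<in>ksub n m. \<forall>S\<in>ksub n m. A m T S = c * MM m T S)" by blast
  then obtain CC where CC: "\<forall>m. m \<le> n \<longrightarrow> (\<forall>T\<in>ksub n m. \<forall>S\<in>ksub n m. A m T S = CC m * MM m T S)"
    by (metis choice)
  have FacM: "Fac d T = CC d * (\<Sum>S\<in>ksub n d. MM d T S * dd d u ((!) (sl S)))"
    if d: "d \<le> n" and T: "T \<in> ksub n d" for d T
  proof -
    have "Fac d T = (\<Sum>S\<in>ksub n d. CC d * (MM d T S * dd d u ((!) (sl S))))"
      unfolding Fac_def
    proof (rule sum.cong[OF refl])
      fix S assume S: "S \<in> ksub n d"
      have "lam_cha g d S {..<d} = dd d (\<lambda>k x. g x k) ((!) (sl S))" by (rule lam_cha_dd)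
      also have "\<dots> = dd d u ((!) (sl S))"
        by (rule dd_cong_rows, use sl_ksub[OF S] in \<open>auto simp: u_def\<close>)
      finally show "A d T S * lam_cha g d S {..<d} = CC d * (MM d T S * dd d u ((!) (sl S)))"
        using CC d T S by simp
    qed
    then show ?thesis by (simp add: sum_distrib_left)
  qed
  show ?thesis
  proof (cases "\<exists>d\<in>D. \<forall>T\<in>ksub n d. Fac d T = 0")
    case True
    then obtain d where d: "d \<in> D" and z: "\<forall>T\<in>ksub n d. Fac d T = 0" by blast
    obtain k0 where k0: "k0 < length ds" "ds ! k0 = d" using d unfolding D_def by (metis in_set_conv_nth)
    have "rnu n ds A (rnu n ds (lam_cha g) (Xi ds)) = (\<lambda>Ts. 0)"
      unfolding tens
    proof (rule ext)
      fix Ts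
      show "(if Ts \<in> tb n ds then (\<Prod>k<length ds. Fac (ds ! k) (Ts ! k)) else 0) = 0"
      proof (cases "Ts \<in> tb n ds")
        case True
        then have "Ts ! k0 \<in> ksub n d" using k0 unfolding tb_def by auto
        then have "Fac (ds ! k0) (Ts ! k0) = 0" using z k0 by simp
        then have "(\<Prod>k<length ds. Fac (ds ! k) (Ts ! k)) = 0"
          using k0 by (meson finite_lessThan lessThan_iff prod_zero_iff)
        then show ?thesis by simp
      qed simp
    qed
    then show ?thesis unfolding ds_def HX using cspan_zero by (metis ds_def)
  next
    case False
    then have nz: "\<And>d. d \<in> D \<Longrightarrow> \<exists>T\<in>ksub n d. Fac d T \<noteq> 0" by blast
    have ex: "\<forall>d\<in>D. \<exists>ws \<kappa>. (\<forall>k<d. inV n (ws k)) \<and>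
            (\<forall>T\<in>ksub n d. (\<Sum>S\<in>ksub n d. MM d T S * dd d u ((!) (sl S))) = \<kappa> * dd d ws ((!) (sl T))) \<and>
            spn d ws = Rimg (Ps ! J d) (spn d u)"
    proof (intro ballI)
      fix d assume d: "d \<in> D"
      have dn: "d \<le> n" using Dn[OF d] by simp
      have lp: "lamP n (Ps ! J d) d (MM d)" using MM dn by blast
      from main_lemma[OF lp uV]
      show "\<exists>ws \<kappa>. (\<forall>k<d. inV n (ws k)) \<and>
            (\<forall>T\<in>ksub n d. (\<Sum>S\<in>ksub n d. MM d T S * dd d u ((!) (sl S))) = \<kappa> * dd d ws ((!) (sl T))) \<and>
            spn d ws = Rimg (Ps ! J d) (spn d u)"
      proof
        assume z: "\<forall>T\<in>ksub n d. (\<Sum>S\<in>ksub n d. MM d T S * dd d u ((!) (sl S))) = 0"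
        obtain T where T: "T \<in> ksub n d" "Fac d T \<noteq> 0" using nz[OF d] by blast
        have "Fac d T = 0" using FacM[OF dn T(1)] z T(1) by simp
        with T(2) show ?thesis by simp
      qed
    qed
    from bchoice[OF ex] obtain WS where "\<forall>d\<in>D. \<exists>\<kappa>. (\<forall>k<d. inV n (WS d k)) \<and>
            (\<forall>T\<in>ksub n d. (\<Sum>S\<in>ksub n d. MM d T S * dd d u ((!) (sl S))) = \<kappa> * dd d (WS d) ((!) (sl T))) \<and>
            spn d (WS d) = Rimg (Ps ! J d) (spn d u)" by (elim exE)
    from bchoice[OF this] obtain KK where WK: "\<forall>d\<in>D. (\<forall>k<d. inV n (WS d k)) \<and>
            (\<forall>T\<in>ksub n d. (\<Sum>S\<in>ksub n d. MM d T S * dd d u ((!) (sl S))) = KK d * dd d (WS d) ((!) (sl T))) \<and>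
            spn d (WS d) = Rimg (Ps ! J d) (spn d u)" by (elim exE)
    have WV: "\<And>d k. d \<in> D \<Longrightarrow> k < d \<Longrightarrow> inV n (WS d k)" using WK by blast
    have WE: "\<And>d. d \<in> D \<Longrightarrow> spn d (WS d) = Rimg (Ps ! J d) (spn d u)" using WK by blast
    have FacW: "Fac d T = CC d * KK d * dd d (WS d) ((!) (sl T))" if d: "d \<in> D" and T: "T \<in> ksub n d" for d T
      using FacM[OF _ T] Dn[OF d] WK d T by simp
    have indW: "indep d (WS d)" if d: "d \<in> D" for d
    proof -
      obtain T where T: "T \<in> ksub n d" "Fac d T \<noteq> 0" using nz[OF d] by blast
      then have "dd d (WS d) ((!) (sl T)) \<noteq> 0" using FacW[OF d T(1)] by auto
      then show ?thesis by (rule dd_indep)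
    qed
    have Jl: "\<And>d. d \<in> D \<Longrightarrow> J d < length Ps" using J Dn by blast
    have nest: "\<forall>d\<in>D. \<forall>d'\<in>D. d < d' \<longrightarrow> spn d (WS d) \<subseteq> spn d' (WS d')"
    proof (intro ballI impI)
      fix d d' assume d: "d \<in> D" and d': "d' \<in> D" and dd': "d < d'"
      show "spn d (WS d) \<subseteq> spn d' (WS d')"
      proof (cases "J d = J d'")
        case True
        have "Rimg (Ps ! J d) (spn d u) \<subseteq> Rimg (Ps ! J d') (spn d' u)"
          unfolding True by (rule Rimg_mono, rule spn_mono, use dd' in simp)
        then show ?thesis using WE[OF d] WE[OF d'] by simp
      next
        case False
        show ?thesis
        proof (cases "J d < J d'")
          case True
          have "Rimg (Ps ! J d) (spn d u) \<subseteq> Im (Ps ! J d)" by (rule Rimg_Im)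
          also have "\<dots> \<subseteq> Indef (Ps ! J d')" by (rule hinge_chain[OF hg True Jl[OF d']])
          also have "\<dots> \<subseteq> Rimg (Ps ! J d') (spn d' u)" by (rule Rimg_Indef[OF zv_spn])
          finally show ?thesis using WE[OF d] WE[OF d'] by simp
        next
          case F2: False
          then have lt: "J d' < J d" using False by simp
          have "Rimg (Ps ! J d') (spn d' u) \<subseteq> Im (Ps ! J d')" by (rule Rimg_Im)
          also have "\<dots> \<subseteq> Indef (Ps ! J d)" by (rule hinge_chain[OF hg lt Jl[OF d]])
          also have "\<dots> \<subseteq> Rimg (Ps ! J d) (spn d u)" by (rule Rimg_Indef[OF zv_spn])
          finally have sub: "spn d' (WS d') \<subseteq> spn d (WS d)" using WE[OF d] WE[OF d'] by simp
          have "\<not> indep d' (WS d')"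
            by (rule steinitz[of d' _ d "WS d"], use sub spn_mem dd' in blast, use dd' in simp)
          with indW[OF d'] show ?thesis by simp
        qed
      qed
    qed
    have finD: "finite D" unfolding D_def by simp
    obtain w where fw: "flinv n D WS n w"
      using flag_exists[OF finD _ _ nest] Dn WV indW by blast
    have wV: "\<forall>i<n. inV n (w i)" and iw: "indep n w" and sw: "\<And>d. d \<in> D \<Longrightarrow> spn d w = spn d (WS d)"
      using fw Dn unfolding flinv_def by auto
    have "\<forall>d. \<exists>\<mu>. d \<in> D \<longrightarrow> (\<forall>r. dd d (WS d) r = \<mu> * dd d w r)"
    proof (intro allI)
      fix d
      show "\<exists>\<mu>. d \<in> D \<longrightarrow> (\<forall>r. dd d (WS d) r = \<mu> * dd d w r)"
      proof (cases "d \<in> D")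
        case True
        have "\<forall>k. \<exists>c. k < d \<longrightarrow> WS d k = lc d c w"
          using spn_mem[of _ d "WS d"] sw[OF True] unfolding spn_def by blast
        then obtain Z where Z: "\<forall>k. k < d \<longrightarrow> WS d k = lc d (Z k) w" by (metis choice)
        have "dd d (WS d) r = dd d w r * det (mat d d (\<lambda>(j,k). Z k j))" for r
        proof -
          have "dd d (WS d) r = dd d (\<lambda>k x. \<Sum>j<d. Z k j * w j x) r"
            by (rule dd_cong, use Z in \<open>simp add: lc_def\<close>)
          also have "\<dots> = dd d w r * det (mat d d (\<lambda>(j,k). Z k j))"
            by (rule dd_mult[of d "\<lambda>j k. Z k j", simplified])
          finally show ?thesis .
        qed
        then show ?thesis by (metis mult.commute)
      qed simp
    qed
    then obtain MU where MU: "\<forall>d. d \<in> D \<longrightarrow> (\<forall>r. dd d (WS d) r = MU d * dd d w r)" by (metis choice)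
    define g' where "g' i k = w k i" for i k
    have g': "g' \<in> GLn n" unfolding GLn_def g'_def using det_basis_nonzero[OF wV iw] by simp
    define C0 where "C0 = (\<Prod>k<length ds. CC (ds ! k) * KK (ds ! k) * MU (ds ! k))"
    have gen: "rnu n ds (lam_cha g') (Xi ds) \<in> X" unfolding X_def using g' by blast
    have "rnu n ds A (rnu n ds (lam_cha g) (Xi ds)) = (\<lambda>Ts. C0 * rnu n ds (lam_cha g') (Xi ds) Ts)"
      unfolding tens unfolding rnu_Xi[OF Dn']
    proof (rule ext)
      fix Ts
      show "(if Ts \<in> tb n ds then \<Prod>k<length ds. Fac (ds ! k) (Ts ! k) else 0) =
         C0 * (if Ts \<in> tb n ds then \<Prod>k<length ds. lam_cha g' (ds ! k) (Ts ! k) {..<ds ! k} else 0)"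
      proof (cases "Ts \<in> tb n ds")
        case True
        have "(\<Prod>k<length ds. Fac (ds ! k) (Ts ! k)) =
          (\<Prod>k<length ds. (CC (ds ! k) * KK (ds ! k) * MU (ds ! k)) * lam_cha g' (ds ! k) (Ts ! k) {..<ds ! k})"
        proof (rule prod.cong[OF refl])
          fix k assume k: "k \<in> {..<length ds}"
          have dD: "ds ! k \<in> D" using k unfolding D_def by simp
          have T: "Ts ! k \<in> ksub n (ds ! k)" using True k unfolding tb_def by auto
          have "lam_cha g' (ds ! k) (Ts ! k) {..<ds ! k} = dd (ds ! k) w ((!) (sl (Ts ! k)))"
            unfolding lam_cha_dd g'_def by simp
          then show "Fac (ds ! k) (Ts ! k) = (CC (ds ! k) * KK (ds ! k) * MU (ds ! k)) * lam_cha g' (ds ! k) (Ts ! k) {..<ds ! k}"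
            using FacW[OF dD T] MU dD by simp
        qed
        also have "\<dots> = C0 * (\<Prod>k<length ds. lam_cha g' (ds ! k) (Ts ! k) {..<ds ! k})"
          unfolding C0_def by (rule prod.distrib)
        finally show ?thesis using True by simp
      qed simp
    qed
    then show ?thesis unfolding ds_def[symmetric] HX using cspan_gen[OF gen] by simp
  qed
qed


theorem lemma2p13:
  fixes n :: nat and nu :: "nat \<Rightarrow> nat"
  assumes signature: "\<forall>j. 1 \<le> j \<and> j < n \<longrightarrow> nu (Suc j) \<le> nu j"
  shows "\<forall>A x. hinge_tuple n A \<and> x \<in> Hnu n nu \<longrightarrow> rnu n (degs n nu) A x \<in> Hnu n nu"
proof (intro allI impI)
  fix A x assume h: "hinge_tuple n A \<and> x \<in> Hnu n nu"
  define ds where "ds = degs n nu"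
  define X where "X = {rnu n ds (lam_cha g) (Xi ds) | g. g \<in> GLn n}"
  have HX: "Hnu n nu = cspan X" unfolding Hnu_def X_def ds_def ..
  from h obtain F c where F: "finite F" "F \<subseteq> X" "x = (\<lambda>i. \<Sum>v\<in>F. c v * v i)"
    unfolding HX cspan_def by auto
  have "rnu n ds A x = (\<lambda>Ts. \<Sum>v\<in>F. c v * rnu n ds A v Ts)"
    unfolding F(3) by (rule rnu_lin[OF F(1)])
  also have "\<dots> \<in> cspan X"
  proof (rule cspan_sum[OF F(1)])
    fix v assume "v \<in> F"
    then have "v \<in> X" using F(2) by auto
    then obtain g where g: "g \<in> GLn n" and v: "v = rnu n ds (lam_cha g) (Xi ds)" unfolding X_def by auto
    have "rnu n (degs n nu) A (rnu n (degs n nu) (lam_cha g) (Xi (degs n nu))) \<in> Hnu n nu"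
      by (rule core[OF conjunct1[OF h] g])
    then show "rnu n ds A v \<in> cspan X" unfolding v ds_def HX .
  qed
  finally show "rnu n (degs n nu) A x \<in> Hnu n nu" unfolding HX ds_def .
qed

end
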